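(* Let $\varphi,\psi$ be nonnegative, bounded, integrable functions on $\mathbb R^d$ and $t\in(0,\infty]$. Then: (i) if $\varphi\le\psi$ then $\xi(\varphi,t)\le\xi(\psi,t)$; (ii) $\xi(\lambda\varphi,t)=\lambda\xi(\varphi,t)$ for every $\lambda>0$; (iii) $\xi(\varphi+\psi,t)\le\xi(\varphi,t)+\xi(\psi,t)$; (iv) for $0<\lambda<1$, with $\varphi_\lambda(x):=\varphi(\lambda x)$, $\xi(\varphi,t)\le\xi(\varphi_\lambda,t)\le\lambda^{-d}\xi(\varphi,t)$; (v) for $0<t<\infty$ and $h>0$, $\frac{t}{t+h}\xi(\varphi,t)\le\xi(\varphi,t+h)\le\xi(\varphi,t)$; (vi) if $\int\varphi\mathbf 1_{\{\varphi\ge a\}}\le\int\psi\mathbf 1_{\{\psi\ge a\}}$ for all $a$, then $\xi(\varphi,t)\le\xi(\psi,t)$; (vii) $\xi(\varphi,t)\to\int\varphi=\xi(\varphi,\infty)$ as $t\to\infty$; (viii) if $\varphi_1,\varphi_2,\dots$ are nonnegative bounded integrable functions with $\varphi_n\to\varphi$ pointwise and $\varphi_n\le\psi$ for all $n$, then $\xi(\varphi_n,t)\to\xi(\varphi,t)$.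
   Context: $H(x)=x\ln x-x+1$ for $x>0$. For a nonnegative bounded measurable $\varphi$ on $\mathbb R^d$ with $0<\int\varphi<\infty$ and $0<t<\infty$, the weighting value $s(\varphi,t)$ is the unique $s\ge0$ with $\int_{\mathbb R^d}H(e^{s\varphi(x)})dx=1/t$, and the weighted integral is $\xi(\varphi,t):=\int\varphi(x)e^{s(\varphi,t)\varphi(x)}dx$. Also $\xi(\varphi,\infty):=\int\varphi$, and $\xi(\varphi,t):=0$ for all $t$ if $\int\varphi=0$. *)

theory Defs
  imports "HOL-Analysis.Analysis"
begin

definition H :: "real \<Rightarrow> real" where
  "H x = x * ln x - x + 1"

text \<open>Nonnegative, bounded, (Lebesgue-)integrable functions on the Euclidean space 'a (= R^d, d = DIM('a)).\<close>
definition nnbi :: "('a::euclidean_space \<Rightarrow> real) \<Rightarrow> bool" where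
  "nnbi \<phi> \<longleftrightarrow> integrable lebesgue \<phi> \<and> (\<forall>x. 0 \<le> \<phi> x) \<and> bounded (range \<phi>)"

definition weight_s :: "('a::euclidean_space \<Rightarrow> real) \<Rightarrow> real \<Rightarrow> real" where
  "weight_s \<phi> t = (THE s. 0 \<le> s \<and> (LINT x|lebesgue. H (exp (s * \<phi> x))) = 1 / t)"

definition xi :: "('a::euclidean_space \<Rightarrow> real) \<Rightarrow> ereal \<Rightarrow> real" where
  "xi \<phi> t = (if (LINT x|lebesgue. \<phi> x) = 0 then 0
     else if t = \<infinity> then (LINT x|lebesgue. \<phi> x)
     else (LINT x|lebesgue. \<phi> x * exp (weight_s \<phi> (real_of_ereal t) * \<phi> x)))"

end

theory Submission
  imports Defs
begin


lemma Hexp: "H (exp y) = (y - 1) * exp y + 1"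
  by (simp add: H_def algebra_simps)

lemma H1: "0 \<le> H (exp y)"
proof -
  have "1 - y \<le> exp (-y)" using exp_ge_add_one_self[of "-y"] by simp
  hence "(1 - y) * exp y \<le> exp (-y) * exp y" by (simp add: mult_right_mono)
  also have "\<dots> = 1" by (simp add: exp_minus)
  finally show ?thesis unfolding Hexp by (simp add: algebra_simps)
qed

lemma H2: assumes "0 \<le> y" shows "H (exp y) \<le> y^2 * exp y"
proof -
  have nn: "0 \<le> y^2 - y + 1"
  proof -
    have "y^2 - y + 1 = (y - 1/2)^2 + 3/4" by (simp add: power2_eq_square field_simps)
    thus ?thesis by (metis add_nonneg_nonneg zero_le_power2 divide_nonneg_nonneg zero_le_numeral)
  qed
  have "(y^2 - y + 1) * (1 + y) \<le> (y^2 - y + 1) * exp y"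
    using exp_ge_add_one_self[of y] nn by (intro mult_left_mono) auto
  moreover have "(y^2 - y + 1) * (1 + y) = y^3 + 1" by (simp add: algebra_simps power2_eq_square power3_eq_cube)
  moreover have "0 \<le> y^3" using assms by simp
  ultimately have "1 \<le> (y^2 - y + 1) * exp y" by linarith
  moreover have "H (exp y) = y^2*exp y - ((y^2 - y + 1) * exp y - 1)" unfolding Hexp by (simp add: algebra_simps)
  ultimately show ?thesis by linarith
qed

lemma H3: assumes "0 \<le> y" shows "y^2 / 2 \<le> H (exp y)"
proof -
  let ?g = "\<lambda>y. (y - 1) * exp y + 1 - y^2/2"
  have "?g 0 \<le> ?g y"
  proof (rule DERIV_nonneg_imp_nondecreasing[OF assms])
    fix x assume x: "0 \<le> x" "x \<le> y"
    show "\<exists>d. (?g has_real_derivative d) (at x) \<and> 0 \<le> d"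
      apply (rule exI[of _ "x * (exp x - 1)"])
      apply (rule conjI)
       apply (rule derivative_eq_intros refl | simp)+
       apply (simp add: algebra_simps)
      using x by simp
  qed
  thus ?thesis unfolding Hexp by simp
qed

lemma H_strict: assumes "0 \<le> y1" "y1 < y2" shows "H (exp y1) < H (exp y2)"
proof -
  let ?g = "\<lambda>y. (y - 1) * exp y + 1"
  have "?g y1 < ?g y2"
  proof (rule DERIV_pos_imp_increasing_open[OF assms(2)])
    fix x assume x: "y1 < x" "x < y2"
    show "\<exists>d. (?g has_real_derivative d) (at x) \<and> 0 < d"
      apply (rule exI[of _ "x * exp x"])
      apply (rule conjI)
       apply (rule derivative_eq_intros refl | simp)+
       apply (simp add: algebra_simps)
      using x assms by simp
  qed (intro continuous_intros)
  thus ?thesis unfolding Hexp by simp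
qed

lemma H_mono_lip: assumes "0 \<le> y1" "y1 \<le> y2" "y2 \<le> M"
  shows "H (exp y2) - H (exp y1) \<le> (y2 - y1) * (M * exp M)"
proof (cases "y1 = y2")
  case True thus ?thesis by simp
next
  case False
  hence lt: "y1 < y2" using assms by simp
  let ?g = "\<lambda>y. (y - 1) * exp y + 1"
  have d: "\<And>x. (?g has_real_derivative x * exp x) (at x)"
    by (rule derivative_eq_intros refl | simp)+ (simp add: algebra_simps)
  obtain z where z: "y1 < z" "z < y2" "?g y2 - ?g y1 = (y2 - y1) * (z * exp z)"
    using MVT2[OF lt, of ?g "\<lambda>x. x * exp x"] d by blast
  have "z * exp z \<le> M * exp M"
    using z assms by (intro mult_mono) auto
  hence "(y2 - y1) * (z * exp z) \<le> (y2 - y1) * (M * exp M)" using lt by (intro mult_left_mono) auto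
  thus ?thesis using z unfolding Hexp by simp
qed

lemma fenchel: assumes "0 < r" "0 < f"
  shows "u * f - H f / r \<le> (exp (r * u) - 1) / r"
proof -
  define v where "v = r * u - ln f"
  have e: "exp (r * u) = f * exp v" using assms by (simp add: v_def exp_diff)
  have "v + 1 \<le> exp v" using exp_ge_add_one_self[of v] by linarith
  hence "f * (v + 1) \<le> f * exp v" using assms by (intro mult_left_mono) auto
  hence "r * (u * f) - H f \<le> exp (r*u) - 1" unfolding e H_def v_def by (simp add: algebra_simps)
  hence "(r * (u * f) - H f) / r \<le> (exp (r*u) - 1) / r" using assms by (intro divide_right_mono) auto
  moreover have "(r * (u * f) - H f) / r = u * f - H f / r" using assms by (simp add: field_simps)
  ultimately show ?thesis by simp
qed

lemma expm1_le: fixes y :: real assumes "0 \<le> y" shows "exp y - 1 \<le> y * exp y"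
proof -
  have "1 - y \<le> exp (-y)" using exp_ge_add_one_self[of "-y"] by simp
  hence "(1 - y) * exp y \<le> exp (-y) * exp y" by (simp add: mult_right_mono)
  thus ?thesis by (simp add: exp_minus algebra_simps)
qed




definition Iint :: "('a::euclidean_space \<Rightarrow> real) \<Rightarrow> real \<Rightarrow> real" where
  "Iint \<phi> r = (LINT x|lebesgue. exp (r * \<phi> x) - 1)"

definition Jf :: "('a::euclidean_space \<Rightarrow> real) \<Rightarrow> real \<Rightarrow> real \<Rightarrow> real" where
  "Jf \<phi> t r = (1 / t + Iint \<phi> r) / r"

definition Fs :: "('a::euclidean_space \<Rightarrow> real) \<Rightarrow> real \<Rightarrow> real" where
  "Fs \<phi> s = (LINT x|lebesgue. H (exp (s * \<phi> x)))"

lemma nnbiD: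
  assumes "nnbi \<phi>"
  shows "integrable lebesgue \<phi>" "\<And>x. 0 \<le> \<phi> x" "\<phi> \<in> borel_measurable lebesgue"
    "\<exists>B\<ge>0. \<forall>x. \<phi> x \<le> B"
proof -
  show i: "integrable lebesgue \<phi>" "\<And>x. 0 \<le> \<phi> x" using assms by (auto simp: nnbi_def)
  show "\<phi> \<in> borel_measurable lebesgue" using i by auto
  from assms obtain a where a: "\<forall>y\<in>range \<phi>. norm y \<le> a" by (auto simp: nnbi_def bounded_iff)
  hence "\<forall>x. \<phi> x \<le> a" by (auto intro: order_trans[OF abs_ge_self])
  moreover have "0 \<le> a" using a i(2)[of undefined] by force
  ultimately show "\<exists>B\<ge>0. \<forall>x. \<phi> x \<le> B" by blast
qed

lemma int_mult_bdd:
  fixes \<phi> g :: "'a::euclidean_space \<Rightarrow> real"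
  assumes "integrable lebesgue \<phi>" "\<And>x. 0 \<le> \<phi> x" "g \<in> borel_measurable lebesgue" "\<And>x. \<bar>g x\<bar> \<le> C"
  shows "integrable lebesgue (\<lambda>x. \<phi> x * g x)"
proof (rule Bochner_Integration.integrable_bound[where f="\<lambda>x. C * \<phi> x"])
  show "integrable lebesgue (\<lambda>x. C * \<phi> x)" using assms(1) by auto
  show "(\<lambda>x. \<phi> x * g x) \<in> borel_measurable lebesgue"
    using assms(1,3) by (intro borel_measurable_times) auto
  show "AE x in lebesgue. norm (\<phi> x * g x) \<le> norm (C * \<phi> x)"
  proof (rule AE_I2)
    fix x
    have "\<bar>\<phi> x * g x\<bar> = \<phi> x * \<bar>g x\<bar>" using assms(2)[of x] by (simp add: abs_mult)
    also have "\<dots> \<le> \<phi> x * C" using assms(2,4) by (intro mult_left_mono) auto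
    finally show "norm (\<phi> x * g x) \<le> norm (C * \<phi> x)" using assms(2)[of x] by (simp add: mult.commute)
  qed
qed

lemma int_dom:
  fixes \<phi> g :: "'a::euclidean_space \<Rightarrow> real"
  assumes "integrable lebesgue \<phi>" "\<And>x. 0 \<le> \<phi> x" "g \<in> borel_measurable lebesgue" "\<And>x. \<bar>g x\<bar> \<le> C * \<phi> x"
  shows "integrable lebesgue g"
proof (rule Bochner_Integration.integrable_bound[where f="\<lambda>x. C * \<phi> x"])
  show "integrable lebesgue (\<lambda>x. C * \<phi> x)" using assms(1) by auto
  show "g \<in> borel_measurable lebesgue" by fact
  show "AE x in lebesgue. norm (g x) \<le> norm (C * \<phi> x)"
  proof (rule AE_I2)
    fix x have "\<bar>g x\<bar> \<le> C * \<phi> x" by (rule assms(4))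
    also have "\<dots> \<le> \<bar>C * \<phi> x\<bar>" by (rule abs_ge_self)
    finally show "norm (g x) \<le> norm (C * \<phi> x)" by simp
  qed
qed

lemma exp_phi_bound:
  fixes u B r :: real
  assumes "0 \<le> u" "u \<le> B" "0 \<le> r"
  shows "\<bar>exp (r * u) - 1\<bar> \<le> (r * exp (r * B)) * u"
proof -
  have "0 \<le> r * u" using assms by simp
  hence "\<bar>exp (r * u) - 1\<bar> = exp (r*u) - 1" by simp
  also have "\<dots> \<le> (r * u) * exp (r * u)" using expm1_le[of "r*u"] assms by simp
  also have "\<dots> \<le> (r * u) * exp (r * B)" using assms by (intro mult_left_mono) (auto intro: mult_left_mono)
  finally show ?thesis by (simp add: algebra_simps)
qed

lemma int_expm1:
  assumes "nnbi \<phi>" "0 \<le> r"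
  shows "integrable lebesgue (\<lambda>x. exp (r * \<phi> x) - 1)"
proof -
  obtain B where B: "0 \<le> B" "\<And>x. \<phi> x \<le> B" using nnbiD(4)[OF assms(1)] by blast
  note m[measurable] = nnbiD(3)[OF assms(1)]
  show ?thesis
    apply (rule int_dom[OF nnbiD(1,2)[OF assms(1)], where C="r * exp (r * B)"])
     apply measurable
    using exp_phi_bound B assms nnbiD(2)[OF assms(1)] by blast
qed

lemma Iint_nonneg: assumes "nnbi \<phi>" "0 \<le> r" shows "0 \<le> Iint \<phi> r"
  unfolding Iint_def using nnbiD(2)[OF assms(1)] assms(2) by (intro Bochner_Integration.integral_nonneg) auto

lemma Iint_le: assumes "nnbi \<phi>" "0 \<le> r" obtains B where "0 \<le> B" "Iint \<phi> r \<le> r * exp (r * B) * integral\<^sup>L lebesgue \<phi>"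
proof -
  obtain B where B: "0 \<le> B" "\<And>x. \<phi> x \<le> B" using nnbiD(4)[OF assms(1)] by blast
  have "Iint \<phi> r \<le> (LINT x|lebesgue. (r * exp (r * B)) * \<phi> x)"
    unfolding Iint_def
    apply (rule integral_mono[OF int_expm1[OF assms]])
    using nnbiD(1)[OF assms(1)] apply simp
    using exp_phi_bound[OF nnbiD(2)[OF assms(1)] B(2) assms(2)] by (meson abs_ge_self order_trans)
  also have "\<dots> = r * exp (r * B) * integral\<^sup>L lebesgue \<phi>" by simp
  finally show ?thesis using that B by blast
qed

lemma int_H:
  assumes "nnbi \<phi>" "0 \<le> s"
  shows "integrable lebesgue (\<lambda>x. H (exp (s * \<phi> x)))"
proof -
  obtain B where B: "0 \<le> B" "\<And>x. \<phi> x \<le> B" using nnbiD(4)[OF assms(1)] by blast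
  note m[measurable] = nnbiD(3)[OF assms(1)]
  show ?thesis
  proof (rule int_dom[OF nnbiD(1,2)[OF assms(1)], where C="s^2 * B * exp (s * B)"])
    show "(\<lambda>x. H (exp (s * \<phi> x))) \<in> borel_measurable lebesgue"
      unfolding H_def by measurable
    fix x
    have p: "0 \<le> \<phi> x" using nnbiD(2)[OF assms(1)] .
    have "\<bar>H (exp (s * \<phi> x))\<bar> = H (exp (s * \<phi> x))" using H1 by simp
    also have "\<dots> \<le> (s * \<phi> x)^2 * exp (s * \<phi> x)" using H2 p assms by simp
    also have "\<dots> = (s^2 * \<phi> x * exp (s*\<phi> x)) * \<phi> x" by (simp add: power2_eq_square algebra_simps)
    also have "\<dots> \<le> (s^2 * B * exp (s*B)) * \<phi> x"
    proof -
      have a1: "s^2 * \<phi> x \<le> s^2 * B" using p B by (intro mult_left_mono) auto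
      have a2: "exp (s*\<phi> x) \<le> exp (s*B)" using B assms by (simp add: mult_left_mono)
      have a3: "0 \<le> s^2 * B" using B by simp
      have "s^2 * \<phi> x * exp (s*\<phi> x) \<le> s^2 * B * exp (s*B)"
        using mult_mono[OF a1 a2 a3] by simp
      thus ?thesis using mult_right_mono p by blast
    qed
    finally show "\<bar>H (exp (s * \<phi> x))\<bar> \<le> s\<^sup>2 * B * exp (s * B) * \<phi> x" .
  qed
qed

lemma Fs0: "Fs \<phi> 0 = 0"
  unfolding Fs_def H_def by simp

lemma int_pos_not_AE0:
  assumes "nnbi \<phi>" "integral\<^sup>L lebesgue \<phi> \<noteq> 0"
  shows "\<not> (AE x in lebesgue. \<phi> x = 0)"
  using assms integral_eq_zero_AE by blast

lemma Fs_strict: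
  assumes "nnbi \<phi>" "integral\<^sup>L lebesgue \<phi> \<noteq> 0" "0 \<le> s1" "s1 < s2"
  shows "Fs \<phi> s1 < Fs \<phi> s2"
proof -
  let ?g = "\<lambda>x. H (exp (s2 * \<phi> x)) - H (exp (s1 * \<phi> x))"
  have p: "\<And>x. 0 \<le> \<phi> x" using nnbiD(2)[OF assms(1)] .
  have gi: "integrable lebesgue ?g" using int_H[OF assms(1)] assms by auto
  have gnn: "\<And>x. 0 \<le> ?g x"
  proof -
    fix x show "0 \<le> ?g x"
    proof (cases "\<phi> x = 0")
      case True thus ?thesis by simp
    next
      case False hence "0 < \<phi> x" using p[of x] by simp
      hence "s1 * \<phi> x < s2 * \<phi> x" using assms by simp
      thus ?thesis using H_strict[of "s1 * \<phi> x" "s2 * \<phi> x"] assms p[of x] by simp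
    qed
  qed
  have "integral\<^sup>L lebesgue ?g \<noteq> 0"
  proof
    assume "integral\<^sup>L lebesgue ?g = 0"
    hence "AE x in lebesgue. ?g x = 0" using integral_nonneg_eq_0_iff_AE[OF gi] gnn by auto
    hence "AE x in lebesgue. \<phi> x = 0"
    proof (rule AE_mp, intro AE_I2 impI)
      fix x assume "?g x = 0"
      show "\<phi> x = 0"
      proof (rule ccontr)
        assume "\<phi> x \<noteq> 0" hence "0 < \<phi> x" using p[of x] by simp
        hence "s1 * \<phi> x < s2 * \<phi> x" using assms by simp
        thus False using H_strict[of "s1 * \<phi> x" "s2 * \<phi> x"] assms p[of x] \<open>?g x = 0\<close> by simp
      qed
    qed
    thus False using int_pos_not_AE0[OF assms(1,2)] by simp
  qed
  moreover have "0 \<le> integral\<^sup>L lebesgue ?g" using gnn by simp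
  moreover have "integral\<^sup>L lebesgue ?g = Fs \<phi> s2 - Fs \<phi> s1"
    unfolding Fs_def using int_H[OF assms(1)] assms by (subst Bochner_Integration.integral_diff) auto
  ultimately show ?thesis by simp
qed

lemma Fs_lip:
  assumes "nnbi \<phi>" "0 \<le> B" "\<And>x. \<phi> x \<le> B" "0 \<le> s1" "s1 \<le> s2" "s2 \<le> S"
  shows "Fs \<phi> s2 - Fs \<phi> s1 \<le> (s2 - s1) * (S * B * exp (S * B) * integral\<^sup>L lebesgue \<phi>)"
proof -
  have p: "\<And>x. 0 \<le> \<phi> x" using nnbiD(2)[OF assms(1)] .
  have "Fs \<phi> s2 - Fs \<phi> s1 = (LINT x|lebesgue. H (exp (s2 * \<phi> x)) - H (exp (s1 * \<phi> x)))"
    unfolding Fs_def using int_H[OF assms(1)] assms by (subst Bochner_Integration.integral_diff) auto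
  also have "\<dots> \<le> (LINT x|lebesgue. ((s2 - s1) * (S * B * exp (S * B))) * \<phi> x)"
  proof (rule integral_mono)
    show "integrable lebesgue (\<lambda>x. H (exp (s2 * \<phi> x)) - H (exp (s1 * \<phi> x)))"
      using int_H[OF assms(1)] assms by auto
    show "integrable lebesgue (\<lambda>x. ((s2 - s1) * (S * B * exp (S * B))) * \<phi> x)"
      using nnbiD(1)[OF assms(1)] by auto
    fix x
    have a: "0 \<le> s1 * \<phi> x" "s1 * \<phi> x \<le> s2 * \<phi> x" "s2 * \<phi> x \<le> S * B"
      using assms p[of x] by (auto intro: mult_mono mult_right_mono)
    have "H (exp (s2 * \<phi> x)) - H (exp (s1 * \<phi> x)) \<le> (s2 * \<phi> x - s1 * \<phi> x) * (S * B * exp (S * B))"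
      using H_mono_lip[OF a] by simp
    also have "\<dots> = ((s2 - s1) * (S * B * exp (S * B))) * \<phi> x" by (simp add: algebra_simps)
    finally show "H (exp (s2 * \<phi> x)) - H (exp (s1 * \<phi> x)) \<le> ((s2 - s1) * (S * B * exp (S * B))) * \<phi> x" .
  qed
  also have "\<dots> = (s2 - s1) * (S * B * exp (S * B) * integral\<^sup>L lebesgue \<phi>)" by simp
  finally show ?thesis .
qed

lemma H_mono: assumes "0 \<le> y1" "y1 \<le> y2" shows "H (exp y1) \<le> H (exp y2)"
proof (cases "y1 = y2")
  case False hence "y1 < y2" using assms by simp
  from H_strict[OF assms(1) this] show ?thesis by simp
qed simp

lemma Fs_mono:
  assumes "nnbi \<phi>" "0 \<le> s1" "s1 \<le> s2"
  shows "Fs \<phi> s1 \<le> Fs \<phi> s2"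
  unfolding Fs_def
proof (rule integral_mono)
  show "integrable lebesgue (\<lambda>x. H (exp (s1 * \<phi> x)))" "integrable lebesgue (\<lambda>x. H (exp (s2 * \<phi> x)))"
    using int_H[OF assms(1)] assms by auto
  fix x have "0 \<le> \<phi> x" using nnbiD(2)[OF assms(1)] .
  thus "H (exp (s1 * \<phi> x)) \<le> H (exp (s2 * \<phi> x))" using assms
    by (intro H_mono mult_right_mono) auto
qed

lemma Fs_cont:
  assumes "nnbi \<phi>" "0 \<le> S"
  shows "continuous_on {0..S} (Fs \<phi>)"
proof -
  obtain B where B: "0 \<le> B" "\<And>x. \<phi> x \<le> B" using nnbiD(4)[OF assms(1)] by blast
  let ?L = "S * B * exp (S * B) * integral\<^sup>L lebesgue \<phi>"
  have "0 \<le> integral\<^sup>L lebesgue \<phi>" using nnbiD(2)[OF assms(1)] by (simp add: Bochner_Integration.integral_nonneg)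
  hence L: "0 \<le> ?L" using assms B by simp
  have "?L-lipschitz_on {0..S} (Fs \<phi>)"
    unfolding lipschitz_on_def
  proof (intro conjI L ballI)
    fix x y assume xy: "x \<in> {0..S}" "y \<in> {0..S}"
    show "dist (Fs \<phi> x) (Fs \<phi> y) \<le> ?L * dist x y"
    proof (cases "x \<le> y")
      case True
      have "Fs \<phi> y - Fs \<phi> x \<le> (y - x) * ?L" using Fs_lip[OF assms(1) B _ True] xy by simp
      moreover have "Fs \<phi> x \<le> Fs \<phi> y" using Fs_mono[OF assms(1) _ True] xy by simp
      ultimately have e1: "dist (Fs \<phi> x) (Fs \<phi> y) = Fs \<phi> y - Fs \<phi> x" "dist x y = y - x"
        and l: "Fs \<phi> y - Fs \<phi> x \<le> (y - x) * ?L" using True by (simp_all add: dist_real_def)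
      show ?thesis unfolding e1 using l by (simp only: mult.commute)
    next
      case False hence F: "y \<le> x" by simp
      have "Fs \<phi> x - Fs \<phi> y \<le> (x - y) * ?L" using Fs_lip[OF assms(1) B _ F] xy by simp
      moreover have "Fs \<phi> y \<le> Fs \<phi> x" using Fs_mono[OF assms(1) _ F] xy by simp
      ultimately have e1: "dist (Fs \<phi> x) (Fs \<phi> y) = Fs \<phi> x - Fs \<phi> y" "dist x y = x - y"
        and l: "Fs \<phi> x - Fs \<phi> y \<le> (x - y) * ?L" using F by (simp_all add: dist_real_def)
      show ?thesis unfolding e1 using l by (simp only: mult.commute)
    qed
  qed
  thus ?thesis by (rule lipschitz_on_continuous_on)
qed

lemma t1: assumes "nnbi \<phi>" "0 \<le> B" "\<And>x. \<phi> x \<le> B" shows "integrable lebesgue (\<lambda>x. (\<phi> x)^2)"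
proof -
  have p: "\<And>x. 0 \<le> \<phi> x" using nnbiD(2)[OF assms(1)] .
  note m[measurable] = nnbiD(3)[OF assms(1)]
  show ?thesis
    apply (rule int_dom[OF nnbiD(1,2)[OF assms(1)], where C=B])
     apply measurable
  proof -
    fix x
    have "\<phi> x * \<phi> x \<le> B * \<phi> x" by (rule mult_right_mono[OF assms(3) p])
    thus "\<bar>(\<phi> x)^2\<bar> \<le> B * \<phi> x" by (simp add: power2_eq_square)
  qed
qed

lemma t2: assumes "nnbi \<phi>" "integral\<^sup>L lebesgue \<phi> \<noteq> 0" "integrable lebesgue (\<lambda>x. (\<phi> x)^2)"
  shows "(LINT x|lebesgue. (\<phi> x)^2) \<noteq> 0"
proof
  assume "(LINT x|lebesgue. (\<phi> x)^2) = 0"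
  hence "AE x in lebesgue. (\<phi> x)^2 = 0" using integral_nonneg_eq_0_iff_AE[OF assms(3)] by simp
  hence "AE x in lebesgue. \<phi> x = 0" by (rule AE_mp) (intro AE_I2, simp)
  thus False using int_pos_not_AE0[OF assms(1,2)] by simp
qed

lemma t3: fixes q t S :: real assumes "0 < q" "0 < t" "S = max 1 (2 / (t * q))"
  shows "1 / t \<le> S^2 * q / 2" "0 \<le> S"
proof -
  have S: "1 \<le> S" "2 / (t * q) \<le> S" unfolding assms by auto
  have "S \<le> S^2" using S by (simp add: power2_eq_square)
  hence "2 / (t * q) \<le> S^2" using S by simp
  thus "1 / t \<le> S^2 * q / 2" using assms by (simp add: field_simps)
  show "0 \<le> S" using S by simp
qed

lemma t4: assumes "nnbi \<phi>" "integrable lebesgue (\<lambda>x. (\<phi> x)^2)" "0 \<le> S"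
  shows "S^2 * (LINT x|lebesgue. (\<phi> x)^2) / 2 \<le> Fs \<phi> S"
proof -
  have p: "\<And>x. 0 \<le> \<phi> x" using nnbiD(2)[OF assms(1)] .
  have "S^2 * (LINT x|lebesgue. (\<phi> x)^2) / 2 = (LINT x|lebesgue. S^2 / 2 * (\<phi> x)^2)" by simp
  also have "\<dots> \<le> Fs \<phi> S"
    unfolding Fs_def
  proof (rule integral_mono)
    show "integrable lebesgue (\<lambda>x. S\<^sup>2 / 2 * (\<phi> x)\<^sup>2)" using assms(2) by auto
    show "integrable lebesgue (\<lambda>x. H (exp (S * \<phi> x)))" using int_H[OF assms(1,3)] .
    fix x show "S\<^sup>2 / 2 * (\<phi> x)\<^sup>2 \<le> H (exp (S * \<phi> x))"
    proof -
      have "(S * \<phi> x)^2 / 2 \<le> H (exp (S * \<phi> x))" using H3[of "S * \<phi> x"] p[of x] assms(3) by simp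
      thus ?thesis by (simp add: power_mult_distrib)
    qed
  qed
  finally show ?thesis .
qed

lemma Fs_big:
  assumes "nnbi \<phi>" "integral\<^sup>L lebesgue \<phi> \<noteq> 0" "0 < t"
  shows "\<exists>S\<ge>0. 1 / t \<le> Fs \<phi> S"
proof -
  obtain B where B: "0 \<le> B" "\<And>x. \<phi> x \<le> B" using nnbiD(4)[OF assms(1)] by blast
  have i2: "integrable lebesgue (\<lambda>x. (\<phi> x)^2)" by (rule t1[OF assms(1) B])
  define q where "q = (LINT x|lebesgue. (\<phi> x)^2)"
  have "q \<noteq> 0" unfolding q_def by (rule t2[OF assms(1,2) i2])
  moreover have "0 \<le> q" unfolding q_def by (simp add: Bochner_Integration.integral_nonneg)
  ultimately have q: "0 < q" by simp
  define S where "S = max 1 (2 / (t * q))"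
  have "1 / t \<le> S^2 * q / 2" "0 \<le> S" using t3[OF q assms(3) S_def] by auto
  moreover have "S^2 * q / 2 \<le> Fs \<phi> S" using t4[OF assms(1) i2 \<open>0 \<le> S\<close>] unfolding q_def by simp
  ultimately show ?thesis by (intro exI[of _ S]) auto
qed

lemma s_char:
  assumes "nnbi \<phi>" "integral\<^sup>L lebesgue \<phi> \<noteq> 0" "0 < t"
  shows "0 < weight_s \<phi> t" "Fs \<phi> (weight_s \<phi> t) = 1 / t"
proof -
  obtain S where S: "0 \<le> S" "1 / t \<le> Fs \<phi> S" using Fs_big[OF assms] by blast
  have F0: "Fs \<phi> 0 \<le> 1 / t" using Fs0[of \<phi>] assms(3) by simp
  obtain s where s: "0 \<le> s" "s \<le> S" "Fs \<phi> s = 1 / t"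
    using IVT'[OF F0 S(2) S(1) Fs_cont[OF assms(1) S(1)]] by auto
  have u: "\<And>s'. 0 \<le> s' \<and> Fs \<phi> s' = 1 / t \<Longrightarrow> s' = s"
  proof -
    fix s' assume a: "0 \<le> s' \<and> Fs \<phi> s' = 1 / t"
    show "s' = s"
    proof (rule ccontr)
      assume "s' \<noteq> s"
      hence "s' < s \<or> s < s'" by linarith
      thus False
      proof
        assume "s' < s" from Fs_strict[OF assms(1,2) _ this] a s show False by simp
      next
        assume "s < s'" from Fs_strict[OF assms(1,2) _ this] a s show False by simp
      qed
    qed
  qed
  have "weight_s \<phi> t = (THE s'. 0 \<le> s' \<and> Fs \<phi> s' = 1 / t)" unfolding weight_s_def Fs_def ..
  also have "\<dots> = s"
  proof (rule the_equality)
    show "0 \<le> s \<and> Fs \<phi> s = 1 / t" using s by simp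
    fix s' assume "0 \<le> s' \<and> Fs \<phi> s' = 1 / t" thus "s' = s" by (rule u)
  qed
  finally have "weight_s \<phi> t = s" .
  moreover have "s \<noteq> 0"
  proof
    assume "s = 0" hence "Fs \<phi> s = 0" using Fs0[of \<phi>] by simp
    thus False using s(3) assms(3) by simp
  qed
  ultimately show "0 < weight_s \<phi> t" "Fs \<phi> (weight_s \<phi> t) = 1 / t" using s by auto
qed




lemma xi_inf: "xi \<phi> \<infinity> = (LINT x|lebesgue. \<phi> x)"
  unfolding xi_def by simp

lemma xi_zero: "integral\<^sup>L lebesgue \<phi> = 0 \<Longrightarrow> xi \<phi> t = 0"
  unfolding xi_def by simp

lemma xi_fin: "integral\<^sup>L lebesgue \<phi> \<noteq> 0 \<Longrightarrow>
   xi \<phi> (ereal t) = (LINT x|lebesgue. \<phi> x * exp (weight_s \<phi> t * \<phi> x))"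
  unfolding xi_def by simp

lemma int_nonneg_nnbi: assumes "nnbi \<phi>" shows "0 \<le> integral\<^sup>L lebesgue \<phi>"
  using nnbiD(2)[OF assms] by (simp add: Bochner_Integration.integral_nonneg)

lemma AE0: assumes "nnbi \<phi>" "integral\<^sup>L lebesgue \<phi> = 0" shows "AE x in lebesgue. \<phi> x = 0"
  using integral_nonneg_eq_0_iff_AE[OF nnbiD(1)[OF assms(1)]] nnbiD(2)[OF assms(1)] assms(2) by simp

lemma Iint_zero: assumes "nnbi \<phi>" "integral\<^sup>L lebesgue \<phi> = 0" shows "Iint \<phi> r = 0"
proof -
  have "AE x in lebesgue. exp (r * \<phi> x) - 1 = 0" using AE0[OF assms] by (rule AE_mp) (intro AE_I2, simp)
  thus ?thesis unfolding Iint_def by (rule integral_eq_zero_AE)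
qed

lemma int_phi_expg:
  assumes "nnbi \<phi>" "nnbi \<psi>" "0 \<le> s"
  shows "integrable lebesgue (\<lambda>x. \<phi> x * exp (s * \<psi> x))"
proof -
  obtain B where B: "0 \<le> B" "\<And>x. \<psi> x \<le> B" using nnbiD(4)[OF assms(2)] by blast
  note [measurable] = nnbiD(3)[OF assms(2)]
  show ?thesis
  proof (rule int_mult_bdd[OF nnbiD(1,2)[OF assms(1)], where C="exp (s * B)"])
    show "(\<lambda>x. exp (s * \<psi> x)) \<in> borel_measurable lebesgue" by measurable
    fix x have "s * \<psi> x \<le> s * B" using B assms(3) by (intro mult_left_mono) auto
    thus "\<bar>exp (s * \<psi> x)\<bar> \<le> exp (s * B)" by simp
  qed
qed

lemma xi_at_s:
  assumes "nnbi \<phi>" "integral\<^sup>L lebesgue \<phi> \<noteq> 0" "0 < t"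
  shows "xi \<phi> (ereal t) = Jf \<phi> t (weight_s \<phi> t)"
proof -
  define s where "s = weight_s \<phi> t"
  have s: "0 < s" "Fs \<phi> s = 1 / t" using s_char[OF assms] unfolding s_def by auto
  have eq: "\<And>x. s * (\<phi> x * exp (s*\<phi> x)) = H (exp (s*\<phi> x)) + (exp (s*\<phi> x) - 1)"
    by (simp add: Hexp algebra_simps)
  have ie: "integrable lebesgue (\<lambda>x. \<phi> x * exp (s * \<phi> x))" using int_phi_expg[OF assms(1,1)] s by simp
  have "s * (LINT x|lebesgue. \<phi> x * exp (s*\<phi> x)) = (LINT x|lebesgue. s * (\<phi> x * exp (s*\<phi> x)))"
    using ie by simp
  also have "\<dots> = (LINT x|lebesgue. H (exp (s*\<phi> x)) + (exp (s*\<phi> x) - 1))" by (simp only: eq)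
  also have "\<dots> = Fs \<phi> s + Iint \<phi> s"
    unfolding Fs_def Iint_def
    by (rule Bochner_Integration.integral_add[OF int_H int_expm1]) (use assms s in auto)
  also have "\<dots> = 1 / t + Iint \<phi> s" using s by simp
  finally have "(LINT x|lebesgue. \<phi> x * exp (s*\<phi> x)) = (1 / t + Iint \<phi> s) / s"
    using s by (simp add: field_simps)
  thus ?thesis unfolding xi_fin[OF assms(2)] Jf_def s_def .
qed

lemma D_bound:
  assumes "nnbi \<phi>" "0 < t" "0 < r" "\<And>x. 0 < f x"
    "integrable lebesgue (\<lambda>x. H (f x))" "(LINT x|lebesgue. H (f x)) \<le> 1 / t"
    "integrable lebesgue (\<lambda>x. \<phi> x * f x)"
  shows "(LINT x|lebesgue. \<phi> x * f x) \<le> Jf \<phi> t r"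
proof -
  have ie: "integrable lebesgue (\<lambda>x. exp (r * \<phi> x) - 1)" using int_expm1[OF assms(1)] assms(3) by simp
  have "(LINT x|lebesgue. \<phi> x * f x) \<le> (LINT x|lebesgue. (exp (r * \<phi> x) - 1) / r + H (f x) / r)"
  proof (rule integral_mono)
    show "integrable lebesgue (\<lambda>x. \<phi> x * f x)" by fact
    show "integrable lebesgue (\<lambda>x. (exp (r * \<phi> x) - 1) / r + H (f x) / r)"
      using ie assms(5) by (intro Bochner_Integration.integrable_add) auto
    fix x show "\<phi> x * f x \<le> (exp (r * \<phi> x) - 1) / r + H (f x) / r"
      using fenchel[OF assms(3) assms(4)[of x], of "\<phi> x"] by linarith
  qed
  also have "\<dots> = Iint \<phi> r / r + (LINT x|lebesgue. H (f x)) / r"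
    unfolding Iint_def
    by (subst Bochner_Integration.integral_add) (use ie assms(5) in auto)
  also have "\<dots> \<le> Iint \<phi> r / r + (1 / t) / r"
    using divide_right_mono[OF assms(6), of r] assms(3) by simp
  also have "\<dots> = Jf \<phi> t r" unfolding Jf_def by (simp add: add_divide_distrib)
  finally show ?thesis .
qed

lemma A_bound:
  assumes "nnbi \<phi>" "0 < t" "0 < r"
  shows "xi \<phi> (ereal t) \<le> Jf \<phi> t r"
proof (cases "integral\<^sup>L lebesgue \<phi> = 0")
  case True
  have "0 \<le> Iint \<phi> r" using Iint_nonneg[OF assms(1)] assms(3) by simp
  hence "0 \<le> Jf \<phi> t r" unfolding Jf_def using assms by simp
  thus ?thesis using xi_zero[OF True] by simp
next
  case False
  define s where "s = weight_s \<phi> t"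
  have s: "0 < s" "Fs \<phi> s = 1 / t" using s_char[OF assms(1) False assms(2)] unfolding s_def by auto
  have "(LINT x|lebesgue. \<phi> x * exp (s * \<phi> x)) \<le> Jf \<phi> t r"
  proof (rule D_bound[OF assms])
    show "integrable lebesgue (\<lambda>x. H (exp (s * \<phi> x)))" using int_H[OF assms(1)] s by simp
    show "(LINT x|lebesgue. H (exp (s * \<phi> x))) \<le> 1 / t" using s unfolding Fs_def by simp
    show "integrable lebesgue (\<lambda>x. \<phi> x * exp (s * \<phi> x))" using int_phi_expg[OF assms(1,1)] s by simp
  qed simp
  thus ?thesis unfolding xi_fin[OF False] s_def .
qed

lemma B_approx:
  assumes "nnbi \<phi>" "0 < t" "0 < e"
  shows "\<exists>r>0. Jf \<phi> t r \<le> xi \<phi> (ereal t) + e"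
proof (cases "integral\<^sup>L lebesgue \<phi> = 0")
  case True
  define r where "r = 1 / (t * e)"
  have r: "0 < r" unfolding r_def using assms by simp
  have "Jf \<phi> t r = e" unfolding Jf_def Iint_zero[OF assms(1) True] r_def using assms by simp
  thus ?thesis using r xi_zero[OF True] by auto
next
  case False
  have "0 < weight_s \<phi> t" using s_char[OF assms(1) False assms(2)] by simp
  moreover have "Jf \<phi> t (weight_s \<phi> t) \<le> xi \<phi> (ereal t) + e"
    using xi_at_s[OF assms(1) False assms(2)] assms(3) by simp
  ultimately show ?thesis by blast
qed

lemma xi_le_of_J:
  assumes "nnbi \<phi>" "0 < t" "\<And>r. 0 < r \<Longrightarrow> y \<le> Jf \<phi> t r"
  shows "y \<le> xi \<phi> (ereal t)"
proof (rule field_le_epsilon)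
  fix e :: real assume "0 < e"
  then obtain r where "0 < r" "Jf \<phi> t r \<le> xi \<phi> (ereal t) + e" using B_approx[OF assms(1,2)] by blast
  thus "y \<le> xi \<phi> (ereal t) + e" using assms(3)[of r] by simp
qed

lemma xi_compare:
  assumes "nnbi \<phi>" "nnbi \<psi>" "0 < t1" "0 < t2" "0 < C"
    "\<And>r. 0 < r \<Longrightarrow> \<exists>r'>0. Jf \<phi> t1 r' \<le> C * Jf \<psi> t2 r"
  shows "xi \<phi> (ereal t1) \<le> C * xi \<psi> (ereal t2)"
proof -
  have "xi \<phi> (ereal t1) / C \<le> xi \<psi> (ereal t2)"
  proof (rule xi_le_of_J[OF assms(2,4)])
    fix r :: real assume "0 < r"
    then obtain r' where r': "0 < r'" "Jf \<phi> t1 r' \<le> C * Jf \<psi> t2 r" using assms(6) by blast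
    have "xi \<phi> (ereal t1) \<le> C * Jf \<psi> t2 r" using A_bound[OF assms(1,3) r'(1)] r'(2) by simp
    thus "xi \<phi> (ereal t1) / C \<le> Jf \<psi> t2 r" using assms(5) by (simp add: divide_le_eq mult.commute)
  qed
  thus ?thesis using assms(5) by (simp add: divide_le_eq mult.commute)
qed

lemma xi_nonneg: assumes "nnbi \<phi>" shows "0 \<le> xi \<phi> t"
  unfolding xi_def using nnbiD(2)[OF assms]
  by (auto intro!: Bochner_Integration.integral_nonneg)

lemma xi_ge_int: assumes "nnbi \<phi>" "0 < t" shows "integral\<^sup>L lebesgue \<phi> \<le> xi \<phi> (ereal t)"
proof (cases "integral\<^sup>L lebesgue \<phi> = 0")
  case True thus ?thesis using xi_zero[OF True] by simp
next
  case False
  define s where "s = weight_s \<phi> t"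
  have s: "0 < s" using s_char[OF assms(1) False assms(2)] unfolding s_def by auto
  have "integral\<^sup>L lebesgue \<phi> \<le> (LINT x|lebesgue. \<phi> x * exp (s * \<phi> x))"
  proof (rule integral_mono)
    show "integrable lebesgue \<phi>" using nnbiD(1)[OF assms(1)] .
    show "integrable lebesgue (\<lambda>x. \<phi> x * exp (s * \<phi> x))" using int_phi_expg[OF assms(1,1)] s by simp
    fix x have p: "0 \<le> \<phi> x" using nnbiD(2)[OF assms(1)] .
    have "1 \<le> exp (s * \<phi> x)" using s p by simp
    hence "\<phi> x * 1 \<le> \<phi> x * exp (s * \<phi> x)" using p by (rule mult_left_mono)
    thus "\<phi> x \<le> \<phi> x * exp (s * \<phi> x)" by simp
  qed
  thus ?thesis unfolding xi_fin[OF False] s_def .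
qed

lemma D_xi:
  assumes "nnbi \<phi>" "0 < t" "\<And>x. 0 < f x"
    "integrable lebesgue (\<lambda>x. H (f x))" "(LINT x|lebesgue. H (f x)) \<le> 1 / t"
    "integrable lebesgue (\<lambda>x. \<phi> x * f x)"
  shows "(LINT x|lebesgue. \<phi> x * f x) \<le> xi \<phi> (ereal t)"
  using D_bound[OF assms(1,2) _ assms(3-6)] by (intro xi_le_of_J[OF assms(1,2)])

lemma nnbiI:
  assumes "integrable lebesgue \<phi>" "\<And>x. 0 \<le> \<phi> x" "\<And>x. \<phi> x \<le> B"
  shows "nnbi \<phi>"
proof -
  have "bounded (range \<phi>)" unfolding bounded_iff
  proof (intro exI ballI)
    fix y assume "y \<in> range \<phi>" then obtain x where "y = \<phi> x" by blast
    thus "norm y \<le> B" using assms(2,3)[of x] by simp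
  qed
  thus ?thesis using assms unfolding nnbi_def by blast
qed

lemma nnbi_add: assumes "nnbi \<phi>" "nnbi \<psi>" shows "nnbi (\<lambda>x. \<phi> x + \<psi> x)"
proof -
  obtain B1 where B1: "\<And>x. \<phi> x \<le> B1" using nnbiD(4)[OF assms(1)] by blast
  obtain B2 where B2: "\<And>x. \<psi> x \<le> B2" using nnbiD(4)[OF assms(2)] by blast
  show ?thesis
  proof (rule nnbiI[where B="B1+B2"])
    show "integrable lebesgue (\<lambda>x. \<phi> x + \<psi> x)" using nnbiD(1) assms by auto
    fix x show "0 \<le> \<phi> x + \<psi> x" using nnbiD(2)[OF assms(1), of x] nnbiD(2)[OF assms(2), of x] by simp
    show "\<phi> x + \<psi> x \<le> B1 + B2" using B1[of x] B2[of x] by simp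
  qed
qed

lemma nnbi_cmult: assumes "nnbi \<phi>" "0 \<le> c" shows "nnbi (\<lambda>x. c * \<phi> x)"
proof -
  obtain B where B: "\<And>x. \<phi> x \<le> B" using nnbiD(4)[OF assms(1)] by blast
  show ?thesis
  proof (rule nnbiI[where B="c*B"])
    show "integrable lebesgue (\<lambda>x. c * \<phi> x)" using nnbiD(1) assms by auto
    fix x show "0 \<le> c * \<phi> x" using nnbiD(2)[OF assms(1), of x] assms(2) by simp
    show "c * \<phi> x \<le> c * B" using B[of x] assms(2) by (rule mult_left_mono)
  qed
qed

lemma ereal_pos_cases:
  assumes "0 < t" "t = \<infinity> \<Longrightarrow> P" "\<And>r. t = ereal r \<Longrightarrow> 0 < r \<Longrightarrow> P"
  shows P
  using assms by (cases t) auto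

lemma part1:
  assumes "nnbi \<phi>" "nnbi \<psi>" "0 < t" "\<And>x. \<phi> x \<le> \<psi> x"
  shows "xi \<phi> t \<le> xi \<psi> t"
proof (rule ereal_pos_cases[OF assms(3)])
  assume "t = \<infinity>"
  moreover have "integral\<^sup>L lebesgue \<phi> \<le> integral\<^sup>L lebesgue \<psi>"
    using nnbiD(1)[OF assms(1)] nnbiD(1)[OF assms(2)] assms(4) by (intro integral_mono) auto
  ultimately show ?thesis by (simp add: xi_inf)
next
  fix t' assume t: "t = ereal t'" "0 < t'"
  have "xi \<phi> (ereal t') \<le> 1 * xi \<psi> (ereal t')"
  proof (rule xi_compare[OF assms(1,2) t(2) t(2)])
    fix r :: real assume r: "0 < r"
    have "Iint \<phi> r \<le> Iint \<psi> r" unfolding Iint_def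
    proof (rule integral_mono)
      show "integrable lebesgue (\<lambda>x. exp (r * \<phi> x) - 1)" "integrable lebesgue (\<lambda>x. exp (r * \<psi> x) - 1)"
        using int_expm1[OF assms(1), of r] int_expm1[OF assms(2), of r] r by auto
      fix x have "r * \<phi> x \<le> r * \<psi> x" using assms(4)[of x] r by (intro mult_left_mono) auto
      thus "exp (r * \<phi> x) - 1 \<le> exp (r * \<psi> x) - 1" by simp
    qed
    hence "Jf \<phi> t' r \<le> 1 * Jf \<psi> t' r" unfolding Jf_def using r by (simp add: divide_right_mono)
    thus "\<exists>r'>0. Jf \<phi> t' r' \<le> 1 * Jf \<psi> t' r" using r by blast
  qed simp
  thus ?thesis using t by simp
qed

lemma Iint_cmult: "Iint (\<lambda>x. c * \<phi> x) r = Iint \<phi> (r * c)"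
  unfolding Iint_def by (simp add: mult.assoc)

lemma part2:
  assumes "nnbi \<phi>" "0 < t" "0 < c"
  shows "xi (\<lambda>x. c * \<phi> x) t = c * xi \<phi> t"
proof (rule ereal_pos_cases[OF assms(2)])
  assume "t = \<infinity>" thus ?thesis by (simp add: xi_inf)
next
  fix t' assume t: "t = ereal t'" "0 < t'"
  have n: "nnbi (\<lambda>x. c * \<phi> x)" using nnbi_cmult[OF assms(1), of c] assms(3) by simp
  have le1: "xi (\<lambda>x. c * \<phi> x) (ereal t') \<le> c * xi \<phi> (ereal t')"
  proof (rule xi_compare[OF n assms(1) t(2) t(2) assms(3)])
    fix r :: real assume r: "0 < r"
    have "Jf (\<lambda>x. c * \<phi> x) t' (r / c) = c * Jf \<phi> t' r"
      unfolding Jf_def Iint_cmult using assms(3) r by (simp add: field_simps)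
    moreover have "0 < r / c" using r assms(3) by simp
    ultimately show "\<exists>r'>0. Jf (\<lambda>x. c * \<phi> x) t' r' \<le> c * Jf \<phi> t' r" by (intro exI[of _ "r/c"]) simp
  qed
  have le2: "xi \<phi> (ereal t') \<le> (1/c) * xi (\<lambda>x. c * \<phi> x) (ereal t')"
  proof (rule xi_compare[OF assms(1) n t(2) t(2)])
    show "0 < 1 / c" using assms(3) by simp
    fix r :: real assume r: "0 < r"
    have "Jf \<phi> t' (c * r) = (1/c) * Jf (\<lambda>x. c * \<phi> x) t' r"
      unfolding Jf_def Iint_cmult using assms(3) r by (simp add: field_simps mult.commute)
    moreover have "0 < c * r" using r assms(3) by simp
    ultimately show "\<exists>r'>0. Jf \<phi> t' r' \<le> (1/c) * Jf (\<lambda>x. c * \<phi> x) t' r" by (intro exI[of _ "c*r"]) simp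
  qed
  have "c * xi \<phi> (ereal t') \<le> xi (\<lambda>x. c * \<phi> x) (ereal t')"
    using le2 assms(3) by (simp add: field_simps)
  thus ?thesis using le1 t by simp
qed

lemma part3:
  assumes "nnbi \<phi>" "nnbi \<psi>" "0 < t"
  shows "xi (\<lambda>x. \<phi> x + \<psi> x) t \<le> xi \<phi> t + xi \<psi> t"
proof (rule ereal_pos_cases[OF assms(3)])
  assume "t = \<infinity>"
  moreover have "(LINT x|lebesgue. \<phi> x + \<psi> x) = integral\<^sup>L lebesgue \<phi> + integral\<^sup>L lebesgue \<psi>"
    using nnbiD(1)[OF assms(1)] nnbiD(1)[OF assms(2)] by simp
  ultimately show ?thesis by (simp add: xi_inf)
next
  fix t' assume t: "t = ereal t'" "0 < t'"
  have n: "nnbi (\<lambda>x. \<phi> x + \<psi> x)" using nnbi_add[OF assms(1,2)] .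
  show ?thesis
  proof (cases "(LINT x|lebesgue. \<phi> x + \<psi> x) = 0")
    case True thus ?thesis using xi_zero[OF True] xi_nonneg[OF assms(1), of t] xi_nonneg[OF assms(2), of t] by simp
  next
    case False
    define s where "s = weight_s (\<lambda>x. \<phi> x + \<psi> x) t'"
    have s: "0 < s" "Fs (\<lambda>x. \<phi> x + \<psi> x) s = 1 / t'"
      using s_char[OF n False t(2)] unfolding s_def by auto
    let ?f = "\<lambda>x. exp (s * (\<phi> x + \<psi> x))"
    have hi: "integrable lebesgue (\<lambda>x. H (?f x))" using int_H[OF n] s by simp
    have hl: "(LINT x|lebesgue. H (?f x)) \<le> 1 / t'" using s unfolding Fs_def by simp
    have i1: "integrable lebesgue (\<lambda>x. \<phi> x * ?f x)" using int_phi_expg[OF assms(1) n] s by simp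
    have i2: "integrable lebesgue (\<lambda>x. \<psi> x * ?f x)" using int_phi_expg[OF assms(2) n] s by simp
    have "xi (\<lambda>x. \<phi> x + \<psi> x) (ereal t') = (LINT x|lebesgue. (\<phi> x + \<psi> x) * ?f x)"
      unfolding xi_fin[OF False] s_def ..
    also have "\<dots> = (LINT x|lebesgue. \<phi> x * ?f x) + (LINT x|lebesgue. \<psi> x * ?f x)"
      using i1 i2 by (simp add: distrib_right)
    also have "\<dots> \<le> xi \<phi> (ereal t') + xi \<psi> (ereal t')"
      using D_xi[OF assms(1) t(2) _ hi hl i1] D_xi[OF assms(2) t(2) _ hi hl i2] by (intro add_mono) auto
    finally show ?thesis using t by simp
  qed
qed

lemma part5:
  assumes "nnbi \<phi>" "0 < t" "0 < h"
  shows "t / (t + h) * xi \<phi> (ereal t) \<le> xi \<phi> (ereal (t + h))"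
    "xi \<phi> (ereal (t + h)) \<le> xi \<phi> (ereal t)"
proof -
  have th: "0 < t + h" using assms by simp
  have "xi \<phi> (ereal (t + h)) \<le> 1 * xi \<phi> (ereal t)"
  proof (rule xi_compare[OF assms(1,1) th assms(2)])
    fix r :: real assume r: "0 < r"
    have "1 / (t + h) \<le> 1 / t" using assms by (simp add: frac_le)
    hence "Jf \<phi> (t + h) r \<le> 1 * Jf \<phi> t r" unfolding Jf_def using r by (simp add: divide_right_mono)
    thus "\<exists>r'>0. Jf \<phi> (t + h) r' \<le> 1 * Jf \<phi> t r" using r by blast
  qed simp
  thus "xi \<phi> (ereal (t + h)) \<le> xi \<phi> (ereal t)" by simp
  have "xi \<phi> (ereal t) \<le> ((t + h) / t) * xi \<phi> (ereal (t + h))"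
  proof (rule xi_compare[OF assms(1,1) assms(2) th])
    show "0 < (t + h) / t" using assms by simp
    fix r :: real assume r: "0 < r"
    have I: "0 \<le> Iint \<phi> r" using Iint_nonneg[OF assms(1)] r by simp
    have "1 \<le> (t + h) / t" using assms by simp
    hence "Iint \<phi> r \<le> (t + h) / t * Iint \<phi> r" using I by (metis mult_right_mono mult_1)
    moreover have "(t + h) / t * (1 / (t + h) + Iint \<phi> r) = (t + h) / t * (1 / (t + h)) + (t + h) / t * Iint \<phi> r"
      by (simp only: distrib_left)
    moreover have "(t + h) / t * (1 / (t + h)) = 1 / t" using th by simp
    ultimately have "1 / t + Iint \<phi> r \<le> (t + h) / t * (1 / (t + h) + Iint \<phi> r)" by linarith
    hence "(1 / t + Iint \<phi> r) / r \<le> ((t + h) / t * (1 / (t + h) + Iint \<phi> r)) / r"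
      using r by (intro divide_right_mono) auto
    moreover have "(t + h) / t * ((1 / (t + h) + Iint \<phi> r) / r) = ((t + h) / t * (1 / (t + h) + Iint \<phi> r)) / r"
      by (rule times_divide_eq_right)
    ultimately have "Jf \<phi> t r \<le> (t + h) / t * Jf \<phi> (t + h) r" unfolding Jf_def by simp
    thus "\<exists>r'>0. Jf \<phi> t r' \<le> (t + h) / t * Jf \<phi> (t + h) r" using r by blast
  qed
  thus "t / (t + h) * xi \<phi> (ereal t) \<le> xi \<phi> (ereal (t + h))"
    using assms by (simp add: field_simps)
qed




lemma Iint_le2: assumes "nnbi \<phi>" "0 \<le> r" "0 \<le> B" "\<And>x. \<phi> x \<le> B"
  shows "Iint \<phi> r \<le> r * exp (r * B) * integral\<^sup>L lebesgue \<phi>"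
proof -
  have "Iint \<phi> r \<le> (LINT x|lebesgue. (r * exp (r * B)) * \<phi> x)"
    unfolding Iint_def
  proof (rule integral_mono[OF int_expm1[OF assms(1,2)]])
    show "integrable lebesgue (\<lambda>x. r * exp (r * B) * \<phi> x)" using nnbiD(1)[OF assms(1)] by simp
    fix x
    have "\<bar>exp (r * \<phi> x) - 1\<bar> \<le> r * exp (r * B) * \<phi> x"
      by (rule exp_phi_bound[OF nnbiD(2)[OF assms(1)] assms(4) assms(2)])
    thus "exp (r * \<phi> x) - 1 \<le> r * exp (r * B) * \<phi> x" by simp
  qed
  also have "\<dots> = r * exp (r * B) * integral\<^sup>L lebesgue \<phi>" by simp
  finally show ?thesis .
qed

lemma part7:
  assumes "nnbi \<phi>"
  shows "((\<lambda>s::real. xi \<phi> (ereal s)) \<longlongrightarrow> (LINT x|lebesgue. \<phi> x)) at_top"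
proof (rule order_tendstoI)
  fix a assume a: "a < (LINT x|lebesgue. \<phi> x)"
  show "eventually (\<lambda>s. a < xi \<phi> (ereal s)) at_top"
  proof (rule eventually_mono[OF eventually_gt_at_top[of 0]])
    fix s :: real assume s: "0 < s" show "a < xi \<phi> (ereal s)" using xi_ge_int[OF assms s] a by simp
  qed
next
  fix a assume a: "(LINT x|lebesgue. \<phi> x) < a"
  obtain B where B: "0 \<le> B" "\<And>x. \<phi> x \<le> B" using nnbiD(4)[OF assms] by blast
  define I where "I = integral\<^sup>L lebesgue \<phi>"
  define e where "e = a - I"
  have e: "0 < e" using a unfolding e_def I_def by simp
  have "((\<lambda>r. exp (r*B) * I) \<longlongrightarrow> exp (0*B) * I) (at_right 0)"
    by (intro tendsto_intros)
  hence "((\<lambda>r. exp (r*B) * I) \<longlongrightarrow> I) (at_right 0)" by simp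
  moreover have "I < I + e/2" using e by simp
  ultimately have ev: "eventually (\<lambda>r. exp (r*B) * I < I + e/2) (at_right 0)"
    by (rule order_tendstoD(2))
  have nb: "at_right (0::real) \<noteq> bot" by simp
  obtain r where r: "0 < r" "exp (r*B) * I < I + e/2"
    using eventually_happens'[OF nb eventually_conj[OF eventually_at_right_less ev]] by blast
  show "eventually (\<lambda>s. xi \<phi> (ereal s) < a) at_top"
  proof (rule eventually_mono[OF eventually_gt_at_top[of "max 0 (2/(r*e))"]])
    fix s :: real assume s: "max 0 (2/(r*e)) < s"
    hence s0: "0 < s" and s1: "2/(r*e) < s" by auto
    have "xi \<phi> (ereal s) \<le> Jf \<phi> s r" by (rule A_bound[OF assms s0 r(1)])
    also have "\<dots> = 1/(s*r) + Iint \<phi> r / r" unfolding Jf_def by (simp add: add_divide_distrib)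
    finally have x1: "xi \<phi> (ereal s) \<le> 1/(s*r) + Iint \<phi> r / r" .
    have "Iint \<phi> r \<le> r * exp (r * B) * I" unfolding I_def by (rule Iint_le2[OF assms _ B]) (use r in simp)
    hence x2: "Iint \<phi> r / r \<le> exp (r * B) * I" using r(1) by (simp add: pos_divide_le_eq algebra_simps)
    have "2 < s * (r * e)" using s1 r(1) e by (simp add: pos_divide_less_eq)
    hence x3: "1/(s*r) < e/2" using s0 r(1) e by (simp add: divide_less_eq algebra_simps)
    show "xi \<phi> (ereal s) < a" using x1 x2 x3 r(2) e_def by linarith
  qed
qed

lemma part8:
  assumes "nnbi \<phi>" "nnbi \<psi>" "0 < t" "\<And>n. nnbi (\<Phi> n)" "\<And>x. (\<lambda>n. \<Phi> n x) \<longlonglongrightarrow> \<phi> x"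
    "\<And>n x. \<Phi> n x \<le> \<psi> x"
  shows "(\<lambda>n. xi (\<Phi> n) t) \<longlonglongrightarrow> xi \<phi> t"
proof (rule ereal_pos_cases[OF assms(3)])
  note [measurable] = nnbiD(3)[OF assms(1)] nnbiD(3)[OF assms(2)] nnbiD(3)[OF assms(4)]
  assume t: "t = \<infinity>"
  have "(\<lambda>n. integral\<^sup>L lebesgue (\<Phi> n)) \<longlonglongrightarrow> integral\<^sup>L lebesgue \<phi>"
  proof (rule integral_dominated_convergence[where w=\<psi>])
    show "\<phi> \<in> borel_measurable lebesgue" by measurable
    show "\<And>n. \<Phi> n \<in> borel_measurable lebesgue" by measurable
    show "integrable lebesgue \<psi>" by (rule nnbiD(1)[OF assms(2)])
    show "AE x in lebesgue. (\<lambda>n. \<Phi> n x) \<longlonglongrightarrow> \<phi> x" using assms(5) by simp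
    fix n show "AE x in lebesgue. norm (\<Phi> n x) \<le> \<psi> x"
    proof (rule AE_I2)
      fix x have "0 \<le> \<Phi> n x" by (rule nnbiD(2)[OF assms(4)])
      thus "norm (\<Phi> n x) \<le> \<psi> x" using assms(6)[of n x] by simp
    qed
  qed
  thus ?thesis using t by (simp add: xi_inf)
next
  note [measurable] = nnbiD(3)[OF assms(1)] nnbiD(3)[OF assms(2)] nnbiD(3)[OF assms(4)]
  fix t' assume t: "t = ereal t'" "0 < t'"
  show ?thesis unfolding t(1)
  proof (rule order_tendstoI)
    fix a assume a: "a < xi \<phi> (ereal t')"
    show "eventually (\<lambda>n. a < xi (\<Phi> n) (ereal t')) sequentially"
    proof (cases "integral\<^sup>L lebesgue \<phi> = 0")
      case True
      hence a0: "a < 0" using a xi_zero[OF True] by simp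
      show ?thesis
      proof (rule always_eventually, rule allI)
        fix n have "0 \<le> xi (\<Phi> n) (ereal t')" by (rule xi_nonneg[OF assms(4)])
        thus "a < xi (\<Phi> n) (ereal t')" using a0 by simp
      qed
    next
      case False
      define s where "s = weight_s \<phi> t'"
      have s: "0 < s" "Fs \<phi> s = 1 / t'" using s_char[OF assms(1) False t(2)] unfolding s_def by auto
      obtain B where B: "0 \<le> B" "\<And>x. \<phi> x \<le> B" using nnbiD(4)[OF assms(1)] by blast
      have lim: "(\<lambda>n. LINT x|lebesgue. \<Phi> n x * exp (s * \<phi> x)) \<longlonglongrightarrow> (LINT x|lebesgue. \<phi> x * exp (s * \<phi> x))"
      proof (rule integral_dominated_convergence[where w="\<lambda>x. exp (s*B) * \<psi> x"])
        show "(\<lambda>x. \<phi> x * exp (s * \<phi> x)) \<in> borel_measurable lebesgue" by measurable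
        show "\<And>n. (\<lambda>x. \<Phi> n x * exp (s * \<phi> x)) \<in> borel_measurable lebesgue" by measurable
        show "integrable lebesgue (\<lambda>x. exp (s*B) * \<psi> x)" using nnbiD(1)[OF assms(2)] by simp
        show "AE x in lebesgue. (\<lambda>n. \<Phi> n x * exp (s * \<phi> x)) \<longlonglongrightarrow> \<phi> x * exp (s * \<phi> x)"
          using assms(5) by (intro AE_I2 tendsto_mult tendsto_const)
        fix n show "AE x in lebesgue. norm (\<Phi> n x * exp (s * \<phi> x)) \<le> exp (s*B) * \<psi> x"
        proof (rule AE_I2)
          fix x
          have p: "0 \<le> \<Phi> n x" by (rule nnbiD(2)[OF assms(4)])
          have "s * \<phi> x \<le> s * B" using B(2)[of x] s by (intro mult_left_mono) auto
          hence "exp (s * \<phi> x) \<le> exp (s*B)" by simp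
          hence "\<Phi> n x * exp (s * \<phi> x) \<le> \<psi> x * exp (s*B)"
            using p assms(6)[of n x] by (intro mult_mono) auto
          thus "norm (\<Phi> n x * exp (s * \<phi> x)) \<le> exp (s*B) * \<psi> x" using p by (simp add: mult.commute)
        qed
      qed
      have "xi \<phi> (ereal t') = (LINT x|lebesgue. \<phi> x * exp (s * \<phi> x))" unfolding xi_fin[OF False] s_def ..
      hence "a < (LINT x|lebesgue. \<phi> x * exp (s * \<phi> x))" using a by simp
      with lim have ev: "eventually (\<lambda>n. a < (LINT x|lebesgue. \<Phi> n x * exp (s * \<phi> x))) sequentially"
        by (rule order_tendstoD(1))
      show ?thesis
      proof (rule eventually_mono[OF ev])
        fix n assume "a < (LINT x|lebesgue. \<Phi> n x * exp (s * \<phi> x))"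
        moreover have "(LINT x|lebesgue. \<Phi> n x * exp (s * \<phi> x)) \<le> xi (\<Phi> n) (ereal t')"
        proof (rule D_xi[OF assms(4) t(2)])
          show "integrable lebesgue (\<lambda>x. H (exp (s * \<phi> x)))" using int_H[OF assms(1)] s by simp
          show "(LINT x|lebesgue. H (exp (s * \<phi> x))) \<le> 1 / t'" using s unfolding Fs_def by simp
          show "integrable lebesgue (\<lambda>x. \<Phi> n x * exp (s * \<phi> x))"
            using int_phi_expg[OF assms(4) assms(1)] s by simp
        qed simp
        ultimately show "a < xi (\<Phi> n) (ereal t')" by simp
      qed
    qed
  next
    fix a assume a: "xi \<phi> (ereal t') < a"
    define e where "e = (a - xi \<phi> (ereal t')) / 2"
    have e: "0 < e" using a e_def by simp
    obtain r where r: "0 < r" "Jf \<phi> t' r \<le> xi \<phi> (ereal t') + e" using B_approx[OF assms(1) t(2) e] by blast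
    have "xi \<phi> (ereal t') + e < a" unfolding e_def using a by (simp add: field_simps)
    hence Ja: "Jf \<phi> t' r < a" using r(2) by simp
    have lim: "(\<lambda>n. Iint (\<Phi> n) r) \<longlonglongrightarrow> Iint \<phi> r"
      unfolding Iint_def
    proof (rule integral_dominated_convergence[where w="\<lambda>x. exp (r * \<psi> x) - 1"])
      show "(\<lambda>x. exp (r * \<phi> x) - 1) \<in> borel_measurable lebesgue" by measurable
      show "\<And>n. (\<lambda>x. exp (r * \<Phi> n x) - 1) \<in> borel_measurable lebesgue" by measurable
      show "integrable lebesgue (\<lambda>x. exp (r * \<psi> x) - 1)" using int_expm1[OF assms(2)] r by simp
      show "AE x in lebesgue. (\<lambda>n. exp (r * \<Phi> n x) - 1) \<longlonglongrightarrow> exp (r * \<phi> x) - 1"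
        using assms(5) by (intro AE_I2 tendsto_intros)
      fix n show "AE x in lebesgue. norm (exp (r * \<Phi> n x) - 1) \<le> exp (r * \<psi> x) - 1"
      proof (rule AE_I2)
        fix x
        have p: "0 \<le> \<Phi> n x" by (rule nnbiD(2)[OF assms(4)])
        have "r * \<Phi> n x \<le> r * \<psi> x" using assms(6)[of n x] r by (intro mult_left_mono) auto
        hence l: "exp (r * \<Phi> n x) \<le> exp (r * \<psi> x)" by simp
        have "1 \<le> exp (r * \<Phi> n x)" using p r by simp
        hence "norm (exp (r * \<Phi> n x) - 1) = exp (r * \<Phi> n x) - 1" by simp
        thus "norm (exp (r * \<Phi> n x) - 1) \<le> exp (r * \<psi> x) - 1" using l by simp
      qed
    qed
    hence "(\<lambda>n. Jf (\<Phi> n) t' r) \<longlonglongrightarrow> Jf \<phi> t' r" unfolding Jf_def using r(1) by (intro tendsto_intros) auto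
    hence ev: "eventually (\<lambda>n. Jf (\<Phi> n) t' r < a) sequentially" using Ja by (rule order_tendstoD(2))
    show "eventually (\<lambda>n. xi (\<Phi> n) (ereal t') < a) sequentially"
    proof (rule eventually_mono[OF ev])
      fix n assume "Jf (\<Phi> n) t' r < a"
      thus "xi (\<Phi> n) (ereal t') < a" using A_bound[OF assms(4)[of n] t(2) r(1)] by simp
    qed
  qed
qed

lemma lebesgue_scale:
  fixes c :: real assumes "0 < c"
  shows "lebesgue = density (distr lebesgue lebesgue (\<lambda>x::'a::euclidean_space. c *\<^sub>R x)) (\<lambda>_. ennreal (c ^ DIM('a)))"
proof -
  have T: "(\<lambda>x::'a. 0 + (\<Sum>j\<in>Basis. (c * (x \<bullet> j)) *\<^sub>R j)) = (\<lambda>x. c *\<^sub>R x)"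
  proof
    fix x :: 'a
    have "(\<Sum>j\<in>Basis. (c * (x \<bullet> j)) *\<^sub>R j) = c *\<^sub>R (\<Sum>j\<in>Basis. (x \<bullet> j) *\<^sub>R j)"
      by (simp add: scaleR_sum_right)
    thus "0 + (\<Sum>j\<in>Basis. (c * (x \<bullet> j)) *\<^sub>R j) = c *\<^sub>R x" by (simp add: euclidean_representation)
  qed
  have P: "(\<Prod>j\<in>(Basis::'a set). \<bar>c\<bar>) = c ^ DIM('a)" using assms by simp
  have "lebesgue = density (distr lebesgue lebesgue (\<lambda>x::'a. 0 + (\<Sum>j\<in>Basis. (c * (x \<bullet> j)) *\<^sub>R j)))
      (\<lambda>_. ennreal (\<Prod>j\<in>(Basis::'a set). \<bar>c\<bar>))"
    by (rule lebesgue_affine_euclidean) (use assms in auto)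
  thus ?thesis unfolding T P .
qed

lemma scale_integral:
  fixes c :: real and g :: "'a::euclidean_space \<Rightarrow> real"
  assumes c: "0 < c" and g[measurable]: "g \<in> borel_measurable lebesgue"
  shows "integrable lebesgue (\<lambda>x. g (c *\<^sub>R x)) \<longleftrightarrow> integrable lebesgue g"
    "integral\<^sup>L lebesgue g = c ^ DIM('a) * (LINT x|lebesgue. g (c *\<^sub>R x))"
proof -
  let ?T = "\<lambda>x::'a. c *\<^sub>R x"
  let ?D = "density (distr lebesgue lebesgue ?T) (\<lambda>_. ennreal (c ^ DIM('a)))"
  have L: "?D = lebesgue" by (rule lebesgue_scale[OF c, symmetric])
  have Tm[measurable]: "?T \<in> lebesgue \<rightarrow>\<^sub>M lebesgue" by (rule lebesgue_measurable_scaling)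
  have gm: "g \<in> borel_measurable (distr lebesgue lebesgue ?T)" by simp
  have "integrable lebesgue g \<longleftrightarrow> integrable ?D g" by (simp only: L)
  also have "\<dots> \<longleftrightarrow> integrable (distr lebesgue lebesgue ?T) (\<lambda>x. c ^ DIM('a) *\<^sub>R g x)"
    by (rule integrable_density[OF gm]) (use c in auto)
  also have "\<dots> \<longleftrightarrow> integrable lebesgue (\<lambda>x. c ^ DIM('a) *\<^sub>R g (?T x))"
    by (rule integrable_distr_eq[OF Tm]) measurable
  also have "\<dots> \<longleftrightarrow> integrable lebesgue (\<lambda>x. g (c *\<^sub>R x))" using c by simp
  finally show "integrable lebesgue (\<lambda>x. g (c *\<^sub>R x)) \<longleftrightarrow> integrable lebesgue g" by simp
  have "integral\<^sup>L lebesgue g = integral\<^sup>L ?D g" by (simp only: L)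
  also have "\<dots> = integral\<^sup>L (distr lebesgue lebesgue ?T) (\<lambda>x. c ^ DIM('a) *\<^sub>R g x)"
    by (rule integral_density[OF gm]) (use c in auto)
  also have "\<dots> = (LINT x|lebesgue. c ^ DIM('a) *\<^sub>R g (?T x))"
    by (rule integral_distr[OF Tm]) measurable
  also have "\<dots> = c ^ DIM('a) * (LINT x|lebesgue. g (c *\<^sub>R x))" by simp
  finally show "integral\<^sup>L lebesgue g = c ^ DIM('a) * (LINT x|lebesgue. g (c *\<^sub>R x))" .
qed

lemma nnbi_scale:
  fixes \<phi> :: "'a::euclidean_space \<Rightarrow> real"
  assumes "nnbi \<phi>" "0 < c"
  shows "nnbi (\<lambda>x. \<phi> (c *\<^sub>R x))"
    "integral\<^sup>L lebesgue \<phi> = c ^ DIM('a) * (LINT x|lebesgue. \<phi> (c *\<^sub>R x))"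
    "Iint \<phi> r = c ^ DIM('a) * Iint (\<lambda>x. \<phi> (c *\<^sub>R x)) r"
proof -
  note m[measurable] = nnbiD(3)[OF assms(1)]
  obtain B where B: "\<And>x. \<phi> x \<le> B" using nnbiD(4)[OF assms(1)] by blast
  show "nnbi (\<lambda>x. \<phi> (c *\<^sub>R x))"
  proof (rule nnbiI[where B=B])
    show "integrable lebesgue (\<lambda>x. \<phi> (c *\<^sub>R x))"
      using scale_integral(1)[OF assms(2) m] nnbiD(1)[OF assms(1)] by simp
    fix x show "0 \<le> \<phi> (c *\<^sub>R x)" by (rule nnbiD(2)[OF assms(1)])
    show "\<phi> (c *\<^sub>R x) \<le> B" by (rule B)
  qed
  show "integral\<^sup>L lebesgue \<phi> = c ^ DIM('a) * (LINT x|lebesgue. \<phi> (c *\<^sub>R x))"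
    using scale_integral(2)[OF assms(2) m] by simp
  have m2: "(\<lambda>x. exp (r * \<phi> x) - 1) \<in> borel_measurable lebesgue" by measurable
  show "Iint \<phi> r = c ^ DIM('a) * Iint (\<lambda>x. \<phi> (c *\<^sub>R x)) r"
    unfolding Iint_def using scale_integral(2)[OF assms(2) m2] by simp
qed

lemma part4:
  fixes \<phi> :: "'a::euclidean_space \<Rightarrow> real"
  assumes "nnbi \<phi>" "0 < t" "0 < c" "c < 1"
  shows "xi \<phi> t \<le> xi (\<lambda>x. \<phi> (c *\<^sub>R x)) t"
    "xi (\<lambda>x. \<phi> (c *\<^sub>R x)) t \<le> c powi (- int DIM('a)) * xi \<phi> t"
proof -
  define K where "K = 1 / c ^ DIM('a)"
  have Kp: "c powi (- int DIM('a)) = K" unfolding K_def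
    by (simp add: power_int_minus divide_inverse)
  have cd: "0 < c ^ DIM('a)" "c ^ DIM('a) \<le> 1" using assms by (auto simp: power_le_one)
  have K1: "1 \<le> K" unfolding K_def using cd by simp
  have n: "nnbi (\<lambda>x. \<phi> (c *\<^sub>R x))" by (rule nnbi_scale(1)[OF assms(1,3)])
  have Ieq: "Iint (\<lambda>x. \<phi> (c *\<^sub>R x)) r = K * Iint \<phi> r" for r
  proof -
    have h: "Iint \<phi> r = c ^ DIM('a) * Iint (\<lambda>x. \<phi> (c *\<^sub>R x)) r" by (rule nnbi_scale(3)[OF assms(1,3)])
    have e: "1 / c ^ DIM('a) * c ^ DIM('a) = 1" using assms(3) by simp
    show ?thesis unfolding K_def h mult.assoc[symmetric] e by simp
  qed
  have Ieq2: "(LINT x|lebesgue. \<phi> (c *\<^sub>R x)) = K * (LINT x|lebesgue. \<phi> x)"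
  proof -
    have h: "(LINT x|lebesgue. \<phi> x) = c ^ DIM('a) * (LINT x|lebesgue. \<phi> (c *\<^sub>R x))"
      using nnbi_scale(2)[OF assms(1,3)] by simp
    have e: "1 / c ^ DIM('a) * c ^ DIM('a) = 1" using assms(3) by simp
    show ?thesis unfolding K_def h mult.assoc[symmetric] e by simp
  qed
  have I0: "0 \<le> (LINT x|lebesgue. \<phi> x)" by (rule int_nonneg_nnbi[OF assms(1)])
  have "xi \<phi> t \<le> xi (\<lambda>x. \<phi> (c *\<^sub>R x)) t \<and> xi (\<lambda>x. \<phi> (c *\<^sub>R x)) t \<le> K * xi \<phi> t"
  proof (rule ereal_pos_cases[OF assms(2)])
    assume t: "t = \<infinity>"
    have "(LINT x|lebesgue. \<phi> x) \<le> K * (LINT x|lebesgue. \<phi> x)"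
      using K1 I0 by (metis mult_right_mono mult_1)
    thus ?thesis using t Ieq2 by (simp add: xi_inf)
  next
    fix t' assume t: "t = ereal t'" "0 < t'"
    have "xi \<phi> (ereal t') \<le> 1 * xi (\<lambda>x. \<phi> (c *\<^sub>R x)) (ereal t')"
    proof (rule xi_compare[OF assms(1) n t(2) t(2)])
      fix r :: real assume r: "0 < r"
      have I: "0 \<le> Iint \<phi> r" using Iint_nonneg[OF assms(1)] r by simp
      have "Iint \<phi> r \<le> K * Iint \<phi> r" using K1 I by (metis mult_right_mono mult_1)
      hence "Jf \<phi> t' r \<le> 1 * Jf (\<lambda>x. \<phi> (c *\<^sub>R x)) t' r" unfolding Jf_def Ieq using r
        by (simp add: divide_right_mono)
      thus "\<exists>r'>0. Jf \<phi> t' r' \<le> 1 * Jf (\<lambda>x. \<phi> (c *\<^sub>R x)) t' r" using r by blast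
    qed simp
    moreover have "xi (\<lambda>x. \<phi> (c *\<^sub>R x)) (ereal t') \<le> K * xi \<phi> (ereal t')"
    proof (rule xi_compare[OF n assms(1) t(2) t(2)])
      show "0 < K" using K1 by simp
      fix r :: real assume r: "0 < r"
      have "1 / t' \<le> K * (1 / t')" using K1 t(2) by (metis mult_right_mono mult_1 less_imp_le divide_pos_pos zero_less_one)
      hence "1 / t' + K * Iint \<phi> r \<le> K * (1 / t' + Iint \<phi> r)" by (simp add: distrib_left)
      hence "(1 / t' + K * Iint \<phi> r) / r \<le> K * (1 / t' + Iint \<phi> r) / r" using r by (intro divide_right_mono) auto
      hence "Jf (\<lambda>x. \<phi> (c *\<^sub>R x)) t' r \<le> K * Jf \<phi> t' r" unfolding Jf_def Ieq by simp
      thus "\<exists>r'>0. Jf (\<lambda>x. \<phi> (c *\<^sub>R x)) t' r' \<le> K * Jf \<phi> t' r" using r by blast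
    qed
    ultimately show ?thesis using t by simp
  qed
  thus "xi \<phi> t \<le> xi (\<lambda>x. \<phi> (c *\<^sub>R x)) t" "xi (\<lambda>x. \<phi> (c *\<^sub>R x)) t \<le> c powi (- int DIM('a)) * xi \<phi> t"
    unfolding Kp by auto
qed




lemma sigma_finite_lebesgue: "sigma_finite_measure (lebesgue :: 'a::euclidean_space measure)"
proof -
  obtain A :: "'a set set" where A: "countable A" "A \<subseteq> sets lborel" "\<Union>A = space lborel"
      "\<forall>a\<in>A. emeasure lborel a \<noteq> \<infinity>"
    using sigma_finite_measure.sigma_finite_countable[OF sigma_finite_lborel] by blast
  show ?thesis
  proof
    show "\<exists>A::'a set set. countable A \<and> A \<subseteq> sets lebesgue \<and> \<Union>A = space lebesgue \<and> (\<forall>a\<in>A. emeasure lebesgue a \<noteq> \<infinity>)"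
    proof (intro exI[of _ A] conjI)
      show "countable A" by fact
      show "A \<subseteq> sets lebesgue" using A(2) by auto
      show "\<Union>A = space lebesgue" using A(3) by simp
      show "\<forall>a\<in>A. emeasure lebesgue a \<noteq> \<infinity>"
      proof
        fix a assume a: "a \<in> A"
        hence "a \<in> sets lborel" using A(2) by auto
        hence "emeasure lebesgue a = emeasure lborel a" by (simp add: emeasure_completion)
        thus "emeasure lebesgue a \<noteq> \<infinity>" using A(4) a by simp
      qed
    qed
  qed
qed

lemma L_G:
  assumes "nnbi \<phi>"
  shows "(\<integral>\<^sup>+x. ennreal (\<phi> x * indicator {y. \<phi> y \<ge> a} x) \<partial>lebesgue)
       = ennreal (LINT x|lebesgue. \<phi> x * indicator {y. \<phi> y \<ge> a} x)"
proof (rule nn_integral_eq_integral)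
  note [measurable] = nnbiD(3)[OF assms]
  show "integrable lebesgue (\<lambda>x. \<phi> x * indicator {y. \<phi> y \<ge> a} x)"
  proof (rule int_mult_bdd[OF nnbiD(1,2)[OF assms], where C=1])
    show "(\<lambda>x. indicator {y. \<phi> y \<ge> a} x :: real) \<in> borel_measurable lebesgue" by measurable
    fix x show "\<bar>indicator {y. \<phi> y \<ge> a} x :: real\<bar> \<le> 1" by (simp add: indicator_def)
  qed
  show "AE x in lebesgue. 0 \<le> \<phi> x * indicator {y. \<phi> y \<ge> a} x"
    using nnbiD(2)[OF assms] by (intro AE_I2) simp
qed

lemma FTC_pow:
  fixes u :: real assumes u: "0 \<le> u"
  shows "(\<integral>\<^sup>+a. ennreal ((real (Suc j) * a ^ j) * indicator {0..u} a * u) \<partial>lborel) = ennreal (u ^ Suc (Suc j))"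
proof -
  let ?g = "\<lambda>a::real. (real (Suc j) * a ^ j) * indicator {0..u} a"
  have hb: "has_bochner_integral lborel ?g (u ^ Suc j - 0 ^ Suc j)"
  proof (rule has_bochner_integral_FTC_Icc_real[OF u])
    fix x :: real
    show "DERIV (\<lambda>a. a ^ Suc j) x :> real (Suc j) * x ^ j"
      using DERIV_pow[of "Suc j" x] by simp
    show "isCont (\<lambda>a. real (Suc j) * a ^ j) x" by (intro continuous_intros)
  qed
  hence i: "integrable lborel ?g" and e: "integral\<^sup>L lborel ?g = u ^ Suc j"
    by (auto simp: has_bochner_integral_iff)
  have "(\<integral>\<^sup>+a. ennreal (?g a * u) \<partial>lborel) = ennreal (LINT a|lborel. ?g a * u)"
  proof (rule nn_integral_eq_integral)
    show "integrable lborel (\<lambda>a. ?g a * u)" using i by simp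
    show "AE a in lborel. 0 \<le> ?g a * u" using u by (intro AE_I2) (simp add: indicator_def)
  qed
  also have "(LINT a|lborel. ?g a * u) = u ^ Suc j * u" using e by simp
  also have "u ^ Suc j * u = u ^ Suc (Suc j)" by (simp add: mult.commute)
  finally show ?thesis .
qed

lemma L_layer:
  fixes \<phi> :: "'a::euclidean_space \<Rightarrow> real"
  assumes "nnbi \<phi>"
  shows "(\<integral>\<^sup>+x. ennreal (\<phi> x ^ Suc (Suc j)) \<partial>lebesgue)
    = (\<integral>\<^sup>+a. ennreal (real (Suc j) * a ^ j) * indicator {0..} a *
           (\<integral>\<^sup>+x. ennreal (\<phi> x * indicator {y. \<phi> y \<ge> a} x) \<partial>lebesgue) \<partial>lborel)"
proof -
  interpret P: pair_sigma_finite lborel "lebesgue :: 'a measure"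
    by (intro pair_sigma_finite.intro sigma_finite_lborel sigma_finite_lebesgue)
  note [measurable] = nnbiD(3)[OF assms]
  have p: "\<And>x. 0 \<le> \<phi> x" using nnbiD(2)[OF assms] .
  define f where "f = (\<lambda>(a::real) (x::'a). ennreal (if 0 \<le> a \<and> a \<le> \<phi> x then real (Suc j) * a ^ j * \<phi> x else 0))"
  have fm: "case_prod f \<in> borel_measurable (lborel \<Otimes>\<^sub>M lebesgue)"
    unfolding f_def by measurable
  have inner_a: "(\<integral>\<^sup>+a. f a x \<partial>lborel) = ennreal (\<phi> x ^ Suc (Suc j))" for x
  proof -
    have "(\<integral>\<^sup>+a. f a x \<partial>lborel) = (\<integral>\<^sup>+a. ennreal ((real (Suc j) * a ^ j) * indicator {0..\<phi> x} a * \<phi> x) \<partial>lborel)"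
      unfolding f_def by (intro nn_integral_cong) (simp add: indicator_def)
    also have "\<dots> = ennreal (\<phi> x ^ Suc (Suc j))" by (rule FTC_pow[OF p])
    finally show ?thesis .
  qed
  have inner_x: "(\<integral>\<^sup>+x. f a x \<partial>lebesgue) = ennreal (real (Suc j) * a ^ j) * indicator {0..} a *
           (\<integral>\<^sup>+x. ennreal (\<phi> x * indicator {y. \<phi> y \<ge> a} x) \<partial>lebesgue)" for a
  proof (cases "0 \<le> a")
    case False
    hence "\<And>x. f a x = 0" unfolding f_def by simp
    thus ?thesis using False by simp
  next
    case True
    have "\<And>x. f a x = ennreal (real (Suc j) * a ^ j) * ennreal (\<phi> x * indicator {y. \<phi> y \<ge> a} x)"
    proof -
      fix x
      have c: "0 \<le> real (Suc j) * a ^ j" using True by simp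
      show "f a x = ennreal (real (Suc j) * a ^ j) * ennreal (\<phi> x * indicator {y. \<phi> y \<ge> a} x)"
      proof (cases "a \<le> \<phi> x")
        case True2: True
        have "f a x = ennreal (real (Suc j) * a ^ j * \<phi> x)" unfolding f_def using True True2 by simp
        also have "\<dots> = ennreal (real (Suc j) * a ^ j) * ennreal (\<phi> x)" using c p[of x] by (rule ennreal_mult)
        finally show ?thesis using True2 by (simp add: indicator_def)
      next
        case False
        thus ?thesis unfolding f_def by (simp add: indicator_def)
      qed
    qed
    hence "(\<integral>\<^sup>+x. f a x \<partial>lebesgue) = (\<integral>\<^sup>+x. ennreal (real (Suc j) * a ^ j) * ennreal (\<phi> x * indicator {y. \<phi> y \<ge> a} x) \<partial>lebesgue)"
      by simp
    also have "\<dots> = ennreal (real (Suc j) * a ^ j) * (\<integral>\<^sup>+x. ennreal (\<phi> x * indicator {y. \<phi> y \<ge> a} x) \<partial>lebesgue)"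
      by (rule nn_integral_cmult) measurable
    finally show ?thesis using True by simp
  qed
  have "(\<integral>\<^sup>+x. ennreal (\<phi> x ^ Suc (Suc j)) \<partial>lebesgue) = (\<integral>\<^sup>+x. (\<integral>\<^sup>+a. f a x \<partial>lborel) \<partial>lebesgue)"
    by (simp add: inner_a)
  also have "\<dots> = (\<integral>\<^sup>+a. (\<integral>\<^sup>+x. f a x \<partial>lebesgue) \<partial>lborel)" by (rule P.Fubini'[OF fm])
  also have "\<dots> = (\<integral>\<^sup>+a. ennreal (real (Suc j) * a ^ j) * indicator {0..} a *
           (\<integral>\<^sup>+x. ennreal (\<phi> x * indicator {y. \<phi> y \<ge> a} x) \<partial>lebesgue) \<partial>lborel)"
    by (simp add: inner_x)
  finally show ?thesis .
qed

lemma moment_le: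
  fixes \<phi> \<psi> :: "'a::euclidean_space \<Rightarrow> real"
  assumes "nnbi \<phi>" "nnbi \<psi>"
    and G: "\<And>a. (LINT x|lebesgue. \<phi> x * indicator {y. \<phi> y \<ge> a} x) \<le> (LINT x|lebesgue. \<psi> x * indicator {y. \<psi> y \<ge> a} x)"
  shows "(\<integral>\<^sup>+x. ennreal (\<phi> x ^ Suc k) \<partial>lebesgue) \<le> (\<integral>\<^sup>+x. ennreal (\<psi> x ^ Suc k) \<partial>lebesgue)"
proof -
  have Gn: "(\<integral>\<^sup>+x. ennreal (\<phi> x * indicator {y. \<phi> y \<ge> a} x) \<partial>lebesgue) \<le>
            (\<integral>\<^sup>+x. ennreal (\<psi> x * indicator {y. \<psi> y \<ge> a} x) \<partial>lebesgue)" for a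
    unfolding L_G[OF assms(1)] L_G[OF assms(2)] using G[of a] by (rule ennreal_leI)
  show ?thesis
  proof (cases k)
    case 0
    have e1: "(\<integral>\<^sup>+x. ennreal (\<phi> x ^ Suc 0) \<partial>lebesgue) = (\<integral>\<^sup>+x. ennreal (\<phi> x * indicator {y. \<phi> y \<ge> 0} x) \<partial>lebesgue)"
      using nnbiD(2)[OF assms(1)] by (intro nn_integral_cong) (simp add: indicator_def)
    have e2: "(\<integral>\<^sup>+x. ennreal (\<psi> x ^ Suc 0) \<partial>lebesgue) = (\<integral>\<^sup>+x. ennreal (\<psi> x * indicator {y. \<psi> y \<ge> 0} x) \<partial>lebesgue)"
      using nnbiD(2)[OF assms(2)] by (intro nn_integral_cong) (simp add: indicator_def)
    show ?thesis unfolding 0 e1 e2 by (rule Gn)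
  next
    case (Suc j)
    show ?thesis unfolding Suc L_layer[OF assms(1)] L_layer[OF assms(2)]
      by (intro nn_integral_mono mult_left_mono Gn) simp
  qed
qed

lemma expm1_series:
  fixes y :: real assumes "0 \<le> y"
  shows "(\<Sum>n. ennreal (y ^ Suc n / fact (Suc n))) = ennreal (exp y - 1)"
proof -
  have "(\<lambda>n. y ^ n / fact n) sums exp y" using exp_converges[of y] by (simp add: divide_inverse mult.commute)
  with sums_Suc_iff[of "\<lambda>n. y ^ n / fact n" "exp y - 1"]
  have s: "(\<lambda>n. y ^ Suc n / fact (Suc n)) sums (exp y - 1)" by simp
  have "(\<Sum>n. ennreal (y ^ Suc n / fact (Suc n))) = ennreal (\<Sum>n. y ^ Suc n / fact (Suc n))"
    using assms s by (intro suminf_ennreal2) (auto simp: sums_summable)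
  also have "(\<Sum>n. y ^ Suc n / fact (Suc n)) = exp y - 1" using s by (simp add: sums_unique[symmetric])
  finally show ?thesis .
qed

lemma Iint_series:
  fixes \<phi> :: "'a::euclidean_space \<Rightarrow> real"
  assumes "nnbi \<phi>" "0 \<le> r"
  shows "ennreal (Iint \<phi> r) = (\<Sum>n. ennreal (r ^ Suc n / fact (Suc n)) * (\<integral>\<^sup>+x. ennreal (\<phi> x ^ Suc n) \<partial>lebesgue))"
proof -
  note [measurable] = nnbiD(3)[OF assms(1)]
  have p: "\<And>x. 0 \<le> \<phi> x" using nnbiD(2)[OF assms(1)] .
  have ae: "AE x in lebesgue. 0 \<le> exp (r * \<phi> x) - 1"
  proof (rule AE_I2)
    fix x have "0 \<le> r * \<phi> x" using p[of x] assms(2) by simp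
    thus "0 \<le> exp (r * \<phi> x) - 1" by simp
  qed
  have "ennreal (Iint \<phi> r) = (\<integral>\<^sup>+x. ennreal (exp (r * \<phi> x) - 1) \<partial>lebesgue)"
    unfolding Iint_def using nn_integral_eq_integral[OF int_expm1[OF assms] ae] by simp
  also have "\<dots> = (\<integral>\<^sup>+x. (\<Sum>n. ennreal ((r * \<phi> x) ^ Suc n / fact (Suc n))) \<partial>lebesgue)"
  proof (rule nn_integral_cong)
    fix x have "0 \<le> r * \<phi> x" using p[of x] assms(2) by simp
    from expm1_series[OF this]
    show "ennreal (exp (r * \<phi> x) - 1) = (\<Sum>n. ennreal ((r * \<phi> x) ^ Suc n / fact (Suc n)))" by simp
  qed
  also have "\<dots> = (\<Sum>n. (\<integral>\<^sup>+x. ennreal ((r * \<phi> x) ^ Suc n / fact (Suc n)) \<partial>lebesgue))"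
    by (rule nn_integral_suminf) measurable
  also have "\<dots> = (\<Sum>n. ennreal (r ^ Suc n / fact (Suc n)) * (\<integral>\<^sup>+x. ennreal (\<phi> x ^ Suc n) \<partial>lebesgue))"
  proof (rule suminf_cong)
    fix n
    have "\<And>x. ennreal ((r * \<phi> x) ^ Suc n / fact (Suc n)) = ennreal (r ^ Suc n / fact (Suc n)) * ennreal (\<phi> x ^ Suc n)"
    proof -
      fix x
      have eq: "(r * \<phi> x) ^ Suc n / fact (Suc n) = (r ^ Suc n / fact (Suc n)) * \<phi> x ^ Suc n"
        by (simp add: power_mult_distrib)
      have nn: "0 \<le> r ^ Suc n / fact (Suc n)" "0 \<le> \<phi> x ^ Suc n" using p[of x] assms(2) by simp_all
      show "ennreal ((r * \<phi> x) ^ Suc n / fact (Suc n)) = ennreal (r ^ Suc n / fact (Suc n)) * ennreal (\<phi> x ^ Suc n)"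
        unfolding eq by (rule ennreal_mult[OF nn])
    qed
    hence "(\<integral>\<^sup>+x. ennreal ((r * \<phi> x) ^ Suc n / fact (Suc n)) \<partial>lebesgue)
         = (\<integral>\<^sup>+x. ennreal (r ^ Suc n / fact (Suc n)) * ennreal (\<phi> x ^ Suc n) \<partial>lebesgue)" by simp
    also have "\<dots> = ennreal (r ^ Suc n / fact (Suc n)) * (\<integral>\<^sup>+x. ennreal (\<phi> x ^ Suc n) \<partial>lebesgue)"
      by (rule nn_integral_cmult) measurable
    finally show "(\<integral>\<^sup>+x. ennreal ((r * \<phi> x) ^ Suc n / fact (Suc n)) \<partial>lebesgue)
         = ennreal (r ^ Suc n / fact (Suc n)) * (\<integral>\<^sup>+x. ennreal (\<phi> x ^ Suc n) \<partial>lebesgue)" .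
  qed
  finally show ?thesis .
qed

lemma Iint_G:
  fixes \<phi> \<psi> :: "'a::euclidean_space \<Rightarrow> real"
  assumes "nnbi \<phi>" "nnbi \<psi>" "0 \<le> r"
    and G: "\<And>a. (LINT x|lebesgue. \<phi> x * indicator {y. \<phi> y \<ge> a} x) \<le> (LINT x|lebesgue. \<psi> x * indicator {y. \<psi> y \<ge> a} x)"
  shows "Iint \<phi> r \<le> Iint \<psi> r"
proof -
  have "ennreal (Iint \<phi> r) \<le> ennreal (Iint \<psi> r)"
    unfolding Iint_series[OF assms(1,3)] Iint_series[OF assms(2,3)]
    by (intro suminf_le mult_left_mono moment_le[OF assms(1,2) G] summableI) simp_all
  thus ?thesis using Iint_nonneg[OF assms(2,3)] by simp
qed

lemma part6:
  fixes \<phi> \<psi> :: "'a::euclidean_space \<Rightarrow> real"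
  assumes "nnbi \<phi>" "nnbi \<psi>" "0 < t"
    and G: "\<And>a. (LINT x|lebesgue. \<phi> x * indicator {y. \<phi> y \<ge> a} x) \<le> (LINT x|lebesgue. \<psi> x * indicator {y. \<psi> y \<ge> a} x)"
  shows "xi \<phi> t \<le> xi \<psi> t"
proof (rule ereal_pos_cases[OF assms(3)])
  assume t: "t = \<infinity>"
  have e1: "(LINT x|lebesgue. \<phi> x * indicator {y. \<phi> y \<ge> 0} x) = (LINT x|lebesgue. \<phi> x)"
    using nnbiD(2)[OF assms(1)] by (intro Bochner_Integration.integral_cong) (simp_all add: indicator_def)
  have e2: "(LINT x|lebesgue. \<psi> x * indicator {y. \<psi> y \<ge> 0} x) = (LINT x|lebesgue. \<psi> x)"
    using nnbiD(2)[OF assms(2)] by (intro Bochner_Integration.integral_cong) (simp_all add: indicator_def)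
  show ?thesis using G[of 0] unfolding e1 e2 t by (simp add: xi_inf)
next
  fix t' assume t: "t = ereal t'" "0 < t'"
  have "xi \<phi> (ereal t') \<le> 1 * xi \<psi> (ereal t')"
  proof (rule xi_compare[OF assms(1,2) t(2) t(2)])
    fix r :: real assume r: "0 < r"
    have "Iint \<phi> r \<le> Iint \<psi> r" using Iint_G[OF assms(1,2) _ G] r by simp
    hence "Jf \<phi> t' r \<le> 1 * Jf \<psi> t' r" unfolding Jf_def using r by (simp add: divide_right_mono)
    thus "\<exists>r'>0. Jf \<phi> t' r' \<le> 1 * Jf \<psi> t' r" using r by blast
  qed simp
  thus ?thesis using t by simp
qed



theorem lemma2p1:
  fixes \<phi> \<psi> :: "'a::euclidean_space \<Rightarrow> real" and t :: ereal
  assumes "nnbi \<phi>" and "nnbi \<psi>" and "0 < t"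
  shows
    "((\<forall>x. \<phi> x \<le> \<psi> x) \<longrightarrow> xi \<phi> t \<le> xi \<psi> t)
   \<and> (\<forall>c::real. c > 0 \<longrightarrow> xi (\<lambda>x. c * \<phi> x) t = c * xi \<phi> t)
   \<and> xi (\<lambda>x. \<phi> x + \<psi> x) t \<le> xi \<phi> t + xi \<psi> t
   \<and> (\<forall>c::real. 0 < c \<and> c < 1 \<longrightarrow>
        xi \<phi> t \<le> xi (\<lambda>x. \<phi> (c *\<^sub>R x)) t \<and>
        xi (\<lambda>x. \<phi> (c *\<^sub>R x)) t \<le> c powi (- int DIM('a)) * xi \<phi> t)
   \<and> (\<forall>t'::real. \<forall>h::real. 0 < t' \<and> 0 < h \<longrightarrow>
        t' / (t' + h) * xi \<phi> (ereal t') \<le> xi \<phi> (ereal (t' + h)) \<and>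
        xi \<phi> (ereal (t' + h)) \<le> xi \<phi> (ereal t'))
   \<and> ((\<forall>a::real. (LINT x|lebesgue. \<phi> x * indicator {y. \<phi> y \<ge> a} x)
               \<le> (LINT x|lebesgue. \<psi> x * indicator {y. \<psi> y \<ge> a} x))
        \<longrightarrow> xi \<phi> t \<le> xi \<psi> t)
   \<and> ((\<lambda>s::real. xi \<phi> (ereal s)) \<longlongrightarrow> (LINT x|lebesgue. \<phi> x)) at_top
   \<and> xi \<phi> \<infinity> = (LINT x|lebesgue. \<phi> x)
   \<and> (\<forall>\<Phi>::nat \<Rightarrow> 'a \<Rightarrow> real.
        (\<forall>n. nnbi (\<Phi> n)) \<and> (\<forall>x. (\<lambda>n. \<Phi> n x) \<longlonglongrightarrow> \<phi> x) \<and> (\<forall>n x. \<Phi> n x \<le> \<psi> x)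
        \<longrightarrow> (\<lambda>n. xi (\<Phi> n) t) \<longlonglongrightarrow> xi \<phi> t)"
  proof -
  have p1: "(\<forall>x. \<phi> x \<le> \<psi> x) \<longrightarrow> xi \<phi> t \<le> xi \<psi> t"
  proof
    assume "\<forall>x. \<phi> x \<le> \<psi> x" thus "xi \<phi> t \<le> xi \<psi> t" by (intro part1[OF assms]) blast
  qed
  have p2: "\<forall>c::real. c > 0 \<longrightarrow> xi (\<lambda>x. c * \<phi> x) t = c * xi \<phi> t"
    using part2[OF assms(1,3)] by blast
  have p3: "xi (\<lambda>x. \<phi> x + \<psi> x) t \<le> xi \<phi> t + xi \<psi> t" by (rule part3[OF assms])
  have p4: "\<forall>c::real. 0 < c \<and> c < 1 \<longrightarrow>
        xi \<phi> t \<le> xi (\<lambda>x. \<phi> (c *\<^sub>R x)) t \<and>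
        xi (\<lambda>x. \<phi> (c *\<^sub>R x)) t \<le> c powi (- int DIM('a)) * xi \<phi> t"
    using part4[OF assms(1,3)] by blast
  have p5: "\<forall>t'::real. \<forall>h::real. 0 < t' \<and> 0 < h \<longrightarrow>
        t' / (t' + h) * xi \<phi> (ereal t') \<le> xi \<phi> (ereal (t' + h)) \<and>
        xi \<phi> (ereal (t' + h)) \<le> xi \<phi> (ereal t')"
    using part5[OF assms(1)] by blast
  have p6: "(\<forall>a::real. (LINT x|lebesgue. \<phi> x * indicator {y. \<phi> y \<ge> a} x)
               \<le> (LINT x|lebesgue. \<psi> x * indicator {y. \<psi> y \<ge> a} x))
        \<longrightarrow> xi \<phi> t \<le> xi \<psi> t"
  proof
    assume "\<forall>a::real. (LINT x|lebesgue. \<phi> x * indicator {y. \<phi> y \<ge> a} x)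
               \<le> (LINT x|lebesgue. \<psi> x * indicator {y. \<psi> y \<ge> a} x)"
    thus "xi \<phi> t \<le> xi \<psi> t" by (intro part6[OF assms]) blast
  qed
  have p7: "((\<lambda>s::real. xi \<phi> (ereal s)) \<longlongrightarrow> (LINT x|lebesgue. \<phi> x)) at_top"
    by (rule part7[OF assms(1)])
  have p7b: "xi \<phi> \<infinity> = (LINT x|lebesgue. \<phi> x)" by (rule xi_inf)
  have p8: "\<forall>\<Phi>::nat \<Rightarrow> 'a \<Rightarrow> real.
        (\<forall>n. nnbi (\<Phi> n)) \<and> (\<forall>x. (\<lambda>n. \<Phi> n x) \<longlonglongrightarrow> \<phi> x) \<and> (\<forall>n x. \<Phi> n x \<le> \<psi> x)
        \<longrightarrow> (\<lambda>n. xi (\<Phi> n) t) \<longlonglongrightarrow> xi \<phi> t"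
  proof (intro allI impI)
    fix \<Phi> :: "nat \<Rightarrow> 'a \<Rightarrow> real"
    assume a: "(\<forall>n. nnbi (\<Phi> n)) \<and> (\<forall>x. (\<lambda>n. \<Phi> n x) \<longlonglongrightarrow> \<phi> x) \<and> (\<forall>n x. \<Phi> n x \<le> \<psi> x)"
    show "(\<lambda>n. xi (\<Phi> n) t) \<longlonglongrightarrow> xi \<phi> t"
      by (rule part8[OF assms]) (use a in blast)+
  qed
  show ?thesis using p1 p2 p3 p4 p5 p6 p7 p7b p8 by blast
qed

end
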